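(* Every scalable NCG is asymptotically well designed, i.e. for every sequence $(d^{(n)})$ of user volume vectors with $T(d^{(n)})\to\infty$ one has $\mathrm{PoA}(d^{(n)})\to 1$.
   Context: A non-atomic congestion game (NCG) consists of: a finite set $A$ of resources; an integer $K\ge 1$ of user groups; pairwise disjoint finite nonempty sets $\mathcal S_1,\dots,\mathcal S_K$ of strategies, $\mathcal S=\bigcup_{k}\mathcal S_k$; constants $r(a,s)\ge 0$ with $\sum_{a} r(a,s)>0$ for every $s$ and $\sum_{s} r(a,s)>0$ for every $a$; continuous nondecreasing consumption price functions $\tau_a:[0,\infty)\to[0,\infty)$; and a user volume vector $d=(d_k)_{k=1}^K\in\mathbb R_{\ge 0}^K$ with total volume $T(d)=\sum_k d_k$. The game structure is fixed while $d$ varies (over all of $\mathbb R^K_{\ge0}$ unless a set of admissible user volume vectors is specified, in which case every quantification over user volume vectors ranges over that set). A feasible profile for $d$ is $f=(f_s)_{s\in\mathcal S}$ with $f_s\ge 0$ and $\sum_{s\in\mathcal S_k} f_s=d_k$ for all $k$; loads $f_a=\sum_{s} r(a,s)f_s$, strategy prices $\tau_s(f)=\sum_{a} r(a,s)\tau_a(f_a)$, social cost $C(f)=\sum_a f_a\tau_a(f_a)=\sum_s f_s\tau_s(f)$. $f$ is an NE-profile if for every $k$ and all $s,s'\in\mathcal S_k$ with $f_s>0$, $\tau_s(f)\le\tau_{s'}(f)$; an SO-profile if it minimizes $C$. All NE-profiles have the same cost, as do all SO-profiles; $\mathrm{PoA}(d)=C(\tilde f)/C(f^* )$ for an NE-profile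 $\tilde f$ and SO-profile $f^*$ for $d$. The game is asymptotically well designed (in AWDG) if $\mathrm{PoA}(d^{(n)})\to1$ whenever $T(d^{(n)})\to\infty$. Normalization: for $d$ with $T(d)>0$, put $\lambda_k=d_k/T(d)$ and $\lambda=(\lambda_k)_k$. For each resource $a$ let $I_a=\{\sum_s r(a,s)\xi_s:\ \xi\in\mathbb R^{\mathcal S}_{\ge0},\ \sum_s\xi_s\le 1\}=[0,\max_s r(a,s)]$. Scalability: the NCG is scalable if for every sequence $(d^{(n)})$ of user volume vectors with $T(d^{(n)})\to\infty$ there exist a subsequence $(n_i)$ and positive reals $(g_i)$ such that: (S0) $\lambda^{(n_i)}\to\lambda$ for some vector $\lambda$; (S1) there are limit price functions $l_a$ on $I_a$, each either a nondecreasing function with values in $[0,\infty)$, or $l_a\equiv+\infty$ on $I_a\cap(0,\infty)$; (S2) for all $a\in A$ and $x\in I_a$, $\tau_a(T(d^{(n_i)})x)/g_i\to l_a(x)$ as $i\to\infty$, and if $l_a(x)<\infty$ then $l_a$ is continuous at $x$; (S3) every group $k$ is either negligible, meaning that for every choice of feasible profiles $f^{(i)}$ for $d^{(n_i)}$, $\frac{1}{T(d^{(n_i)})g_i}\sum_{s\in\mathcal S_k} f^{(i)}_s\tau_s(f^{(i)})\to 0$, or has a tight strategy, i.e. some $s\in\mathcal S_k$ with $l_a$ real-valued for every $a$ with $r(a,s)>0$; (S4) in the limit game $\Gamma_\infty$ — the NCG with resources $A^{tight}$ (those $a$ with $r(a,s)>0$ for some tight $s$), strategy sets $\mathcal S_k^{tight}$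 (tight strategies of $\mathcal S_k$, only groups with $\mathcal S_k^{tight}\neq\emptyset$ included), the same $r(a,s)$, prices $l_a$, and user volume vector $\lambda$ — NE-profiles and SO-profiles have equal cost; (S5) the cost of NE-profiles of $\Gamma_\infty$ is positive. *)

theory Defs
  imports "HOL-Analysis.Analysis"
begin

text \<open>Resources have type 'a, strategies type 's.
  A game is given by a resource set A, a set G of group indices, strategy sets Sg k (k in G),
  consumption constants r, price functions p, and a user volume vector d (indexed by nat).\<close>

definition strats :: "nat set \<Rightarrow> (nat \<Rightarrow> 's set) \<Rightarrow> 's set" where
  "strats G Sg = (\<Union>k\<in>G. Sg k)"

definition load :: "'s set \<Rightarrow> ('a \<Rightarrow> 's \<Rightarrow> real) \<Rightarrow> ('s \<Rightarrow> real) \<Rightarrow> 'a \<Rightarrow> real" where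
  "load S r f a = (\<Sum>s\<in>S. r a s * f s)"

definition sprice :: "'a set \<Rightarrow> 's set \<Rightarrow> ('a \<Rightarrow> 's \<Rightarrow> real) \<Rightarrow> ('a \<Rightarrow> real \<Rightarrow> real)
    \<Rightarrow> ('s \<Rightarrow> real) \<Rightarrow> 's \<Rightarrow> real" where
  "sprice A S r p f s = (\<Sum>a\<in>A. r a s * p a (load S r f a))"

definition cost :: "'a set \<Rightarrow> 's set \<Rightarrow> ('a \<Rightarrow> 's \<Rightarrow> real) \<Rightarrow> ('a \<Rightarrow> real \<Rightarrow> real)
    \<Rightarrow> ('s \<Rightarrow> real) \<Rightarrow> real" where
  "cost A S r p f = (\<Sum>a\<in>A. load S r f a * p a (load S r f a))"

definition feasible :: "nat set \<Rightarrow> (nat \<Rightarrow> 's set) \<Rightarrow> (nat \<Rightarrow> real) \<Rightarrow> ('s \<Rightarrow> real) \<Rightarrow> bool" where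
  "feasible G Sg d f \<longleftrightarrow> (\<forall>s\<in>strats G Sg. 0 \<le> f s) \<and> (\<forall>k\<in>G. sum f (Sg k) = d k)"

definition is_NE :: "'a set \<Rightarrow> nat set \<Rightarrow> (nat \<Rightarrow> 's set) \<Rightarrow> ('a \<Rightarrow> 's \<Rightarrow> real)
    \<Rightarrow> ('a \<Rightarrow> real \<Rightarrow> real) \<Rightarrow> (nat \<Rightarrow> real) \<Rightarrow> ('s \<Rightarrow> real) \<Rightarrow> bool" where
  "is_NE A G Sg r p d f \<longleftrightarrow> feasible G Sg d f \<and>
     (\<forall>k\<in>G. \<forall>s\<in>Sg k. \<forall>s'\<in>Sg k. f s > 0 \<longrightarrow>
        sprice A (strats G Sg) r p f s \<le> sprice A (strats G Sg) r p f s')"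

definition is_SO :: "'a set \<Rightarrow> nat set \<Rightarrow> (nat \<Rightarrow> 's set) \<Rightarrow> ('a \<Rightarrow> 's \<Rightarrow> real)
    \<Rightarrow> ('a \<Rightarrow> real \<Rightarrow> real) \<Rightarrow> (nat \<Rightarrow> real) \<Rightarrow> ('s \<Rightarrow> real) \<Rightarrow> bool" where
  "is_SO A G Sg r p d f \<longleftrightarrow> feasible G Sg d f \<and>
     (\<forall>h. feasible G Sg d h \<longrightarrow> cost A (strats G Sg) r p f \<le> cost A (strats G Sg) r p h)"

definition ncg :: "'a set \<Rightarrow> nat \<Rightarrow> (nat \<Rightarrow> 's set) \<Rightarrow> ('a \<Rightarrow> 's \<Rightarrow> real)
    \<Rightarrow> ('a \<Rightarrow> real \<Rightarrow> real) \<Rightarrow> bool" where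
  "ncg A K Sg r \<tau> \<longleftrightarrow>
     finite A \<and> K \<ge> 1 \<and>
     (\<forall>k<K. finite (Sg k) \<and> Sg k \<noteq> {}) \<and>
     (\<forall>k<K. \<forall>k'<K. k \<noteq> k' \<longrightarrow> Sg k \<inter> Sg k' = {}) \<and>
     (\<forall>a\<in>A. \<forall>s\<in>strats {..<K} Sg. 0 \<le> r a s) \<and>
     (\<forall>s\<in>strats {..<K} Sg. (\<Sum>a\<in>A. r a s) > 0) \<and>
     (\<forall>a\<in>A. (\<Sum>s\<in>strats {..<K} Sg. r a s) > 0) \<and>
     (\<forall>a\<in>A. continuous_on {0..} (\<tau> a) \<and> mono_on {0..} (\<tau> a) \<and> (\<forall>x\<ge>0. 0 \<le> \<tau> a x))"

definition total :: "nat \<Rightarrow> (nat \<Rightarrow> real) \<Rightarrow> real" where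
  "total K d = (\<Sum>k<K. d k)"

definition awdg :: "'a set \<Rightarrow> nat \<Rightarrow> (nat \<Rightarrow> 's set) \<Rightarrow> ('a \<Rightarrow> 's \<Rightarrow> real)
    \<Rightarrow> ('a \<Rightarrow> real \<Rightarrow> real) \<Rightarrow> (nat \<Rightarrow> real) set \<Rightarrow> bool" where
  "awdg A K Sg r \<tau> D \<longleftrightarrow>
     (\<forall>dn :: nat \<Rightarrow> nat \<Rightarrow> real. (\<forall>n. dn n \<in> D) \<and> filterlim (\<lambda>n. total K (dn n)) at_top sequentially \<longrightarrow>
       (\<forall>fne fso. (\<forall>n. is_NE A {..<K} Sg r \<tau> (dn n) (fne n)) \<and> (\<forall>n. is_SO A {..<K} Sg r \<tau> (dn n) (fso n)) \<longrightarrow>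
          (\<lambda>n. cost A (strats {..<K} Sg) r \<tau> (fne n) / cost A (strats {..<K} Sg) r \<tau> (fso n))
             \<longlonglongrightarrow> 1))"

definition Ires :: "'s set \<Rightarrow> ('a \<Rightarrow> 's \<Rightarrow> real) \<Rightarrow> 'a \<Rightarrow> real set" where
  "Ires S r a = {0 .. Max ((\<lambda>s. r a s) ` S)}"

definition real_valued_on :: "real set \<Rightarrow> (real \<Rightarrow> ereal) \<Rightarrow> bool" where
  "real_valued_on I la \<longleftrightarrow> (\<forall>x\<in>I. \<bar>la x\<bar> \<noteq> \<infinity>)"

text \<open>(S1) together with the continuity part of (S2): a limit price function on I is either a
  real-valued, nonnegative, nondecreasing function, continuous on I, or identically +infinity on
  I \<inter> (0,\<infinity>).\<close>
definition limit_price_fun :: "real set \<Rightarrow> (real \<Rightarrow> ereal) \<Rightarrow> bool" where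
  "limit_price_fun I la \<longleftrightarrow>
     (real_valued_on I la \<and> (\<forall>x\<in>I. 0 \<le> la x) \<and> mono_on I la \<and>
        continuous_on I (\<lambda>x. real_of_ereal (la x)))
     \<or> (\<forall>x\<in>I. x > 0 \<longrightarrow> la x = \<infinity>)"

definition tight :: "'a set \<Rightarrow> 's set \<Rightarrow> ('a \<Rightarrow> 's \<Rightarrow> real) \<Rightarrow> ('a \<Rightarrow> real \<Rightarrow> ereal) \<Rightarrow> 's \<Rightarrow> bool" where
  "tight A S r l s \<longleftrightarrow> (\<forall>a\<in>A. r a s > 0 \<longrightarrow> real_valued_on (Ires S r a) (l a))"

definition tight_res :: "'a set \<Rightarrow> 's set \<Rightarrow> ('a \<Rightarrow> 's \<Rightarrow> real) \<Rightarrow> ('a \<Rightarrow> real \<Rightarrow> ereal) \<Rightarrow> 'a set" where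
  "tight_res A S r l = {a\<in>A. \<exists>s\<in>S. tight A S r l s \<and> r a s > 0}"

definition tight_strats :: "'a set \<Rightarrow> 's set \<Rightarrow> ('a \<Rightarrow> 's \<Rightarrow> real) \<Rightarrow> ('a \<Rightarrow> real \<Rightarrow> ereal)
    \<Rightarrow> (nat \<Rightarrow> 's set) \<Rightarrow> nat \<Rightarrow> 's set" where
  "tight_strats A S r l Sg k = {s\<in>Sg k. tight A S r l s}"

definition tight_groups :: "'a set \<Rightarrow> 's set \<Rightarrow> ('a \<Rightarrow> 's \<Rightarrow> real) \<Rightarrow> ('a \<Rightarrow> real \<Rightarrow> ereal)
    \<Rightarrow> (nat \<Rightarrow> 's set) \<Rightarrow> nat \<Rightarrow> nat set" where
  "tight_groups A S r l Sg K = {k. k < K \<and> tight_strats A S r l Sg k \<noteq> {}}"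

definition scalable :: "'a set \<Rightarrow> nat \<Rightarrow> (nat \<Rightarrow> 's set) \<Rightarrow> ('a \<Rightarrow> 's \<Rightarrow> real)
    \<Rightarrow> ('a \<Rightarrow> real \<Rightarrow> real) \<Rightarrow> (nat \<Rightarrow> real) set \<Rightarrow> bool" where
  "scalable A K Sg r \<tau> D \<longleftrightarrow>
     (\<forall>dn :: nat \<Rightarrow> nat \<Rightarrow> real. (\<forall>n. dn n \<in> D) \<and> filterlim (\<lambda>n. total K (dn n)) at_top sequentially \<longrightarrow>
       (\<exists>(ns :: nat \<Rightarrow> nat) (g :: nat \<Rightarrow> real) (lam :: nat \<Rightarrow> real) (l :: 'a \<Rightarrow> real \<Rightarrow> ereal).
          let S = strats {..<K} Sg;
              T = (\<lambda>i. total K (dn (ns i)));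
              At = tight_res A S r l;
              St = tight_strats A S r l Sg;
              Gt = tight_groups A S r l Sg K;
              lp = (\<lambda>a x. real_of_ereal (l a x))
          in strict_mono ns \<and> (\<forall>i. 0 < g i) \<and>
             \<comment> \<open>(S0)\<close>
             (\<forall>k<K. (\<lambda>i. dn (ns i) k / T i) \<longlonglongrightarrow> lam k) \<and>
             \<comment> \<open>(S1) and continuity part of (S2)\<close>
             (\<forall>a\<in>A. limit_price_fun (Ires S r a) (l a)) \<and>
             \<comment> \<open>(S2)\<close>
             (\<forall>a\<in>A. \<forall>x\<in>Ires S r a. (\<lambda>i. ereal (\<tau> a (T i * x) / g i)) \<longlonglongrightarrow> l a x) \<and>
             \<comment> \<open>(S3)\<close>
             (\<forall>k<K.
                (\<forall>F :: nat \<Rightarrow> 's \<Rightarrow> real. (\<forall>i. feasible {..<K} Sg (dn (ns i)) (F i)) \<longrightarrow>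
                   (\<lambda>i. (\<Sum>s\<in>Sg k. F i s * sprice A S r \<tau> (F i) s) / (T i * g i)) \<longlonglongrightarrow> 0)
                \<or> (\<exists>s\<in>Sg k. tight A S r l s)) \<and>
             \<comment> \<open>(S4): in the limit game, NE- and SO-profiles have equal cost\<close>
             (\<forall>f h. is_NE At Gt St r lp lam f \<and> is_SO At Gt St r lp lam h \<longrightarrow>
                cost At (strats Gt St) r lp f = cost At (strats Gt St) r lp h) \<and>
             \<comment> \<open>(S5): NE-profiles of the limit game have positive cost\<close>
             (\<forall>f. is_NE At Gt St r lp lam f \<longrightarrow> cost At (strats Gt St) r lp f > 0)))"

end

theory Submission
  imports Defs
begin


lemma ncg_facts:
  assumes "ncg A K Sg r \<tau>"
  shows "finite A" "finite (strats {..<K} Sg)" "\<And>k. k<K \<Longrightarrow> finite (Sg k)"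
    "\<And>k. k<K \<Longrightarrow> Sg k \<noteq> {}" "\<And>k. k<K \<Longrightarrow> Sg k \<subseteq> strats {..<K} Sg"
    "\<And>a s. a\<in>A \<Longrightarrow> s\<in>strats {..<K} Sg \<Longrightarrow> 0 \<le> r a s"
    "\<And>a. a\<in>A \<Longrightarrow> continuous_on {0..} (\<tau> a)"
    "\<And>a. a\<in>A \<Longrightarrow> mono_on {0..} (\<tau> a)"
    "\<And>a x. a\<in>A \<Longrightarrow> 0 \<le> x \<Longrightarrow> 0 \<le> \<tau> a x"
    "\<And>k k'. k<K \<Longrightarrow> k'<K \<Longrightarrow> k\<noteq>k' \<Longrightarrow> Sg k \<inter> Sg k' = {}"
    "\<And>a. a\<in>A \<Longrightarrow> (\<Sum>s\<in>strats {..<K} Sg. r a s) > 0"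
  using assms unfolding ncg_def strats_def by auto

lemma sum_groups:
  assumes "ncg A K Sg r \<tau>"
  shows "sum h (strats {..<K} Sg) = (\<Sum>k<K. sum h (Sg k))"
  unfolding strats_def
  by (rule sum.UNION_disjoint) (use ncg_facts[OF assms] in auto)

lemma feasible_sum:
  assumes "ncg A K Sg r \<tau>" "feasible {..<K} Sg d F"
  shows "sum F (strats {..<K} Sg) = total K d"
  using assms(2) unfolding sum_groups[OF assms(1)] feasible_def total_def by simp

lemma feasible_le:
  assumes "ncg A K Sg r \<tau>" "feasible {..<K} Sg d F" "\<forall>k<K. 0 \<le> d k"
    and "s \<in> strats {..<K} Sg"
  shows "0 \<le> F s" "F s \<le> total K d"
proof -
  show "0 \<le> F s" using assms unfolding feasible_def by auto
  obtain k where k: "k<K" "s \<in> Sg k" using assms(4) unfolding strats_def by auto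
  have "F s \<le> sum F (Sg k)"
  proof (rule member_le_sum)
    show "finite (Sg k)" using ncg_facts(3)[OF assms(1) k(1)] .
    show "s \<in> Sg k" by fact
    fix x assume "x \<in> Sg k - {s}"
    then have "x \<in> strats {..<K} Sg" using k(1) unfolding strats_def by auto
    then show "0 \<le> F x" using assms(2) unfolding feasible_def by auto
  qed
  also have "\<dots> = d k" using assms k unfolding feasible_def by auto
  also have "\<dots> \<le> total K d" unfolding total_def
    by (rule member_le_sum) (use k assms in auto)
  finally show "F s \<le> total K d" .
qed

lemma cost_strat:
  assumes "finite A" "finite S"
  shows "cost A S r p F = (\<Sum>s\<in>S. F s * sprice A S r p F s)"
  unfolding cost_def sprice_def load_def
  by (simp add: sum_distrib_left sum_distrib_right mult_ac sum.swap[of _ A S])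

lemma r_le_Max:
  assumes "ncg A K Sg r \<tau>" "s \<in> strats {..<K} Sg"
  shows "r a s \<le> Max ((\<lambda>s. r a s) ` strats {..<K} Sg)"
  using assms ncg_facts(2)[OF assms(1)] by (intro Max_ge) auto

lemma Max_pos:
  assumes "ncg A K Sg r \<tau>" "a \<in> A"
  shows "0 < Max ((\<lambda>s. r a s) ` strats {..<K} Sg)"
proof -
  have "(\<Sum>s\<in>strats {..<K} Sg. r a s) > 0" using ncg_facts(11)[OF assms] .
  then obtain s where s: "s \<in> strats {..<K} Sg" "r a s > 0"
    by (meson not_le sum_nonpos)
  then show ?thesis using r_le_Max[OF assms(1) s(1), of a] by linarith
qed

lemma load_nonneg:
  assumes "ncg A K Sg r \<tau>" "a \<in> A" "\<forall>s\<in>strats {..<K} Sg. 0 \<le> F s"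
  shows "0 \<le> load (strats {..<K} Sg) r F a"
  unfolding load_def using assms ncg_facts(6)[OF assms(1)] by (intro sum_nonneg) auto

lemma load_ge:
  assumes "ncg A K Sg r \<tau>" "a \<in> A" "\<forall>s\<in>strats {..<K} Sg. 0 \<le> F s"
    "s \<in> strats {..<K} Sg"
  shows "r a s * F s \<le> load (strats {..<K} Sg) r F a"
  unfolding load_def using assms ncg_facts(6)[OF assms(1)] ncg_facts(2)[OF assms(1)]
  by (intro member_le_sum) auto

lemma load_le:
  assumes "ncg A K Sg r \<tau>" "a \<in> A" "\<forall>s\<in>strats {..<K} Sg. 0 \<le> F s"
  shows "load (strats {..<K} Sg) r F a \<le> Max ((\<lambda>s. r a s) ` strats {..<K} Sg) * sum F (strats {..<K} Sg)"
  unfolding load_def sum_distrib_left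
  using assms r_le_Max[OF assms(1)] by (intro sum_mono mult_right_mono) auto

lemma load_sub_le:
  assumes "ncg A K Sg r \<tau>" "a \<in> A" "\<forall>s\<in>strats {..<K} Sg. 0 \<le> F s" "S' \<subseteq> strats {..<K} Sg"
  shows "load S' r F a \<le> load (strats {..<K} Sg) r F a" "0 \<le> load S' r F a"
  unfolding load_def using assms ncg_facts(6)[OF assms(1)] ncg_facts(2)[OF assms(1)]
  by (auto intro!: sum_mono2 sum_nonneg)


lemma eventually_subseq:
  assumes "eventually P sequentially" "strict_mono \<phi>"
  shows "eventually (\<lambda>i. P (\<phi> i)) sequentially"
proof -
  obtain N where N: "\<And>n. n \<ge> N \<Longrightarrow> P n" using assms(1) unfolding eventually_sequentially by auto
  have "\<And>n. n \<ge> N \<Longrightarrow> P (\<phi> n)" using N seq_suble[OF assms(2)] le_trans by blast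
  then show ?thesis unfolding eventually_sequentially by auto
qed

lemma bolzano_finite:
  fixes F :: "nat \<Rightarrow> 's \<Rightarrow> real"
  assumes "finite S" "\<And>i s. s \<in> S \<Longrightarrow> \<bar>F i s\<bar> \<le> B"
  shows "\<exists>\<phi>. strict_mono \<phi> \<and> (\<forall>s\<in>S. convergent (\<lambda>i. F (\<phi> i) s))"
  using assms
proof (induction S arbitrary: F rule: finite_induct)
  case empty
  then show ?case by (intro exI[of _ id]) (auto simp: strict_mono_def)
next
  case (insert x S)
  obtain \<phi>1 where p1: "strict_mono \<phi>1" "\<forall>s\<in>S. convergent (\<lambda>i. F (\<phi>1 i) s)"
    using insert.IH[of F] insert.prems by auto
  have "bounded (range (\<lambda>i. F (\<phi>1 i) x))"
    unfolding bounded_real using insert.prems by auto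
  then obtain lx \<phi>2 where p2: "strict_mono \<phi>2" "((\<lambda>i. F (\<phi>1 i) x) \<circ> \<phi>2) \<longlonglongrightarrow> lx"
    using bounded_imp_convergent_subsequence by blast
  have "strict_mono (\<phi>1 \<circ> \<phi>2)" using strict_mono_o p1(1) p2(1) by blast
  moreover have "\<forall>s\<in>insert x S. convergent (\<lambda>i. F ((\<phi>1 \<circ> \<phi>2) i) s)"
  proof
    fix s assume "s \<in> insert x S"
    then show "convergent (\<lambda>i. F ((\<phi>1 \<circ> \<phi>2) i) s)"
    proof
      assume "s = x" then show ?thesis using p2(2) by (auto simp: convergent_def o_def)
    next
      assume "s \<in> S"
      then have "convergent ((\<lambda>i. F (\<phi>1 i) s) \<circ> \<phi>2)"
        using p1(2) p2(1) convergent_subseq_convergent by blast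
      then show ?thesis by (simp add: o_def)
    qed
  qed
  ultimately show ?case by blast
qed




locale sc =
  fixes A :: "'a set" and K :: nat and Sg :: "nat \<Rightarrow> 's set" and r :: "'a \<Rightarrow> 's \<Rightarrow> real"
    and \<tau> :: "'a \<Rightarrow> real \<Rightarrow> real" and d :: "nat \<Rightarrow> nat \<Rightarrow> real" and T g :: "nat \<Rightarrow> real"
    and lam :: "nat \<Rightarrow> real" and l :: "'a \<Rightarrow> real \<Rightarrow> ereal" and fN fS :: "nat \<Rightarrow> 's \<Rightarrow> real"
  assumes ncg: "ncg A K Sg r \<tau>"
    and dnn: "\<And>i k. k<K \<Longrightarrow> 0 \<le> d i k"
    and Tdef: "\<And>i. T i = total K (d i)"
    and Tpos: "\<And>i. 0 < T i"
    and Ttop: "filterlim T at_top sequentially"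
    and gpos: "\<And>i. 0 < g i"
    and S0: "\<And>k. k<K \<Longrightarrow> (\<lambda>i. d i k / T i) \<longlonglongrightarrow> lam k"
    and S1: "\<And>a. a\<in>A \<Longrightarrow> limit_price_fun (Ires (strats {..<K} Sg) r a) (l a)"
    and S2: "\<And>a x. a\<in>A \<Longrightarrow> x \<in> Ires (strats {..<K} Sg) r a \<Longrightarrow>
               (\<lambda>i. ereal (\<tau> a (T i * x) / g i)) \<longlonglongrightarrow> l a x"
    and S3: "\<And>k. k<K \<Longrightarrow>
       (\<lambda>i. (\<Sum>s\<in>Sg k. fN i s * sprice A (strats {..<K} Sg) r \<tau> (fN i) s) / (T i * g i)) \<longlonglongrightarrow> 0
       \<or> (\<exists>s\<in>Sg k. tight A (strats {..<K} Sg) r l s)"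
    and S4: "\<And>f h. is_NE (tight_res A (strats {..<K} Sg) r l) (tight_groups A (strats {..<K} Sg) r l Sg K)
                 (tight_strats A (strats {..<K} Sg) r l Sg) r (\<lambda>a x. real_of_ereal (l a x)) lam f \<and>
              is_SO (tight_res A (strats {..<K} Sg) r l) (tight_groups A (strats {..<K} Sg) r l Sg K)
                 (tight_strats A (strats {..<K} Sg) r l Sg) r (\<lambda>a x. real_of_ereal (l a x)) lam h \<Longrightarrow>
         cost (tight_res A (strats {..<K} Sg) r l) (strats (tight_groups A (strats {..<K} Sg) r l Sg K)
                 (tight_strats A (strats {..<K} Sg) r l Sg)) r (\<lambda>a x. real_of_ereal (l a x)) f =
         cost (tight_res A (strats {..<K} Sg) r l) (strats (tight_groups A (strats {..<K} Sg) r l Sg K)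
                 (tight_strats A (strats {..<K} Sg) r l Sg)) r (\<lambda>a x. real_of_ereal (l a x)) h"
    and S5: "\<And>f. is_NE (tight_res A (strats {..<K} Sg) r l) (tight_groups A (strats {..<K} Sg) r l Sg K)
                 (tight_strats A (strats {..<K} Sg) r l Sg) r (\<lambda>a x. real_of_ereal (l a x)) lam f \<Longrightarrow>
         cost (tight_res A (strats {..<K} Sg) r l) (strats (tight_groups A (strats {..<K} Sg) r l Sg K)
                 (tight_strats A (strats {..<K} Sg) r l Sg)) r (\<lambda>a x. real_of_ereal (l a x)) f > 0"
    and NE: "\<And>i. is_NE A {..<K} Sg r \<tau> (d i) (fN i)"
    and SO: "\<And>i. is_SO A {..<K} Sg r \<tau> (d i) (fS i)"
begin

abbreviation "S \<equiv> strats {..<K} Sg"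
abbreviation "At \<equiv> tight_res A S r l"
abbreviation "St \<equiv> tight_strats A S r l Sg"
abbreviation "Gt \<equiv> tight_groups A S r l Sg K"
abbreviation "TS \<equiv> strats Gt St"
abbreviation "lp \<equiv> (\<lambda>a x. real_of_ereal (l a x))"
abbreviation "Mx a \<equiv> Max ((\<lambda>s. r a s) ` S)"

lemmas nf = ncg_facts[OF ncg]

lemma Ires_eq: "Ires S r a = {0..Mx a}" unfolding Ires_def by simp

lemma rv_props:
  assumes a: "a \<in> A" and rv: "real_valued_on (Ires S r a) (l a)"
  shows "\<And>x. x \<in> Ires S r a \<Longrightarrow> l a x = ereal (lp a x)"
    "\<And>x. x \<in> Ires S r a \<Longrightarrow> 0 \<le> lp a x"
    "continuous_on (Ires S r a) (lp a)"
    "mono_on (Ires S r a) (lp a)"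
proof -
  have Mp: "0 < Mx a" using Max_pos[OF ncg a] .
  then have MI: "Mx a \<in> Ires S r a" unfolding Ires_eq by auto
  have c1: "(\<forall>x\<in>Ires S r a. 0 \<le> l a x) \<and> mono_on (Ires S r a) (l a) \<and>
        continuous_on (Ires S r a) (\<lambda>x. real_of_ereal (l a x))"
    using S1[OF a] rv MI Mp unfolding limit_price_fun_def real_valued_on_def by fastforce
  show fin: "\<And>x. x \<in> Ires S r a \<Longrightarrow> l a x = ereal (lp a x)"
    using rv unfolding real_valued_on_def by (simp add: ereal_real)
  show "\<And>x. x \<in> Ires S r a \<Longrightarrow> 0 \<le> lp a x" using c1 by (simp add: real_of_ereal_pos)
  show "continuous_on (Ires S r a) (lp a)" using c1 by simp
  show "mono_on (Ires S r a) (lp a)"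
  proof (rule mono_onI)
    fix x y assume "x \<in> Ires S r a" "y \<in> Ires S r a" "x \<le> y"
    then have "l a x \<le> l a y" using c1 by (auto dest: mono_onD)
    then show "lp a x \<le> lp a y" using fin[of x] fin[of y] \<open>x \<in> _\<close> \<open>y \<in> _\<close> by (metis ereal_less_eq(3))
  qed
qed

lemma S2_real:
  assumes a: "a \<in> A" and rv: "real_valued_on (Ires S r a) (l a)" and x: "x \<in> Ires S r a"
    and phi: "strict_mono \<phi>"
  shows "(\<lambda>i. \<tau> a (T (\<phi> i) * x) / g (\<phi> i)) \<longlonglongrightarrow> lp a x"
proof -
  have "(\<lambda>i. ereal (\<tau> a (T i * x) / g i)) \<longlonglongrightarrow> ereal (lp a x)"
    using S2[OF a x] rv_props(1)[OF a rv x] by simp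
  then have "(\<lambda>i. \<tau> a (T i * x) / g i) \<longlonglongrightarrow> lp a x"
    using lim_real_of_ereal by fastforce
  from LIMSEQ_subseq_LIMSEQ[OF this phi] show ?thesis by (simp add: o_def)
qed

lemma tau_mono_step:
  assumes a: "a \<in> A" and y: "y \<in> Ires S r a" and z: "z \<in> Ires S r a" and yz: "y \<le> z"
  shows "\<tau> a (T j * y) / g j \<le> \<tau> a (T j * z) / g j"
proof -
  have y0: "0 \<le> y" using y unfolding Ires_eq by auto
  have "T j * y \<le> T j * z" using Tpos[of j] yz by (simp add: mult_left_mono)
  moreover have "T j * y \<in> {0..}" "T j * z \<in> {0..}" using Tpos[of j] y0 yz by auto
  ultimately have "\<tau> a (T j * y) \<le> \<tau> a (T j * z)"
    using nf(8)[OF a] by (metis mono_onD)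
  then show ?thesis using gpos[of j] by (simp add: divide_right_mono)
qed

lemma tau_conv:
  assumes a: "a \<in> A" and rv: "real_valued_on (Ires S r a) (l a)"
    and phi: "strict_mono \<phi>" and X: "\<And>i. X i \<in> Ires S r a"
    and lim: "X \<longlonglongrightarrow> x" and x: "x \<in> Ires S r a"
  shows "(\<lambda>i. \<tau> a (T (\<phi> i) * X i) / g (\<phi> i)) \<longlonglongrightarrow> lp a x"
proof (rule order_tendstoI)
  have cont: "continuous_on (Ires S r a) (lp a)" using rv_props(3)[OF a rv] .
  note ci = cont[unfolded continuous_on_iff, rule_format, OF x]
  fix b assume b: "lp a x < b"
  obtain y where y: "y \<in> Ires S r a" "lp a y < b" "eventually (\<lambda>i. X i \<le> y) sequentially"
  proof (cases "x < Mx a")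
    case True
    obtain e where e: "e > 0" "\<forall>x'\<in>Ires S r a. dist x' x < e \<longrightarrow> dist (lp a x') (lp a x) < b - lp a x"
      using ci[of "b - lp a x"] b by auto
    define y where "y = min (x + e/2) (Mx a)"
    have yI: "y \<in> Ires S r a" using x e True unfolding y_def Ires_eq by auto
    have "dist y x < e" using e True x unfolding y_def dist_real_def Ires_eq by auto
    then have "lp a y < b" using e(2) yI by (smt (verit) dist_real_def)
    moreover have "x < y" using e True unfolding y_def by auto
    then have "eventually (\<lambda>i. X i < y) sequentially" by (rule order_tendstoD(2)[OF lim])
    then have "eventually (\<lambda>i. X i \<le> y) sequentially" by eventually_elim auto
    ultimately show ?thesis using that yI by blast
  next
    case False
    then have "x = Mx a" using x unfolding Ires_eq by auto
    then show ?thesis using that[of x] x b X unfolding Ires_eq by simp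
  qed
  have "eventually (\<lambda>i. \<tau> a (T (\<phi> i) * y) / g (\<phi> i) < b) sequentially"
    using order_tendstoD[OF S2_real[OF a rv y(1) phi]] y(2) by blast
  then show "eventually (\<lambda>i. \<tau> a (T (\<phi> i) * X i) / g (\<phi> i) < b) sequentially"
    using y(3) proof eventually_elim
    case (elim i)
    then show ?case using tau_mono_step[OF a X[of i] y(1), of "\<phi> i"] by linarith
  qed
next
  have cont: "continuous_on (Ires S r a) (lp a)" using rv_props(3)[OF a rv] .
  note ci = cont[unfolded continuous_on_iff, rule_format, OF x]
  fix b assume b: "b < lp a x"
  obtain y where y: "y \<in> Ires S r a" "b < lp a y" "eventually (\<lambda>i. y \<le> X i) sequentially"
  proof (cases "0 < x")
    case True
    obtain e where e: "e > 0" "\<forall>x'\<in>Ires S r a. dist x' x < e \<longrightarrow> dist (lp a x') (lp a x) < lp a x - b"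
      using ci[of "lp a x - b"] b by auto
    define y where "y = max (x - e/2) 0"
    have yI: "y \<in> Ires S r a" using x e True unfolding y_def Ires_eq by auto
    have "dist y x < e" using e True x unfolding y_def dist_real_def Ires_eq by auto
    then have "b < lp a y" using e(2) yI by (smt (verit) dist_real_def)
    moreover have "y < x" using e True unfolding y_def by auto
    then have "eventually (\<lambda>i. y < X i) sequentially" by (rule order_tendstoD(1)[OF lim])
    then have "eventually (\<lambda>i. y \<le> X i) sequentially" by eventually_elim auto
    ultimately show ?thesis using that yI by blast
  next
    case False
    then have "x = 0" using x unfolding Ires_eq by auto
    then show ?thesis using that[of x] x b X unfolding Ires_eq by simp
  qed
  have "eventually (\<lambda>i. b < \<tau> a (T (\<phi> i) * y) / g (\<phi> i)) sequentially"
    using order_tendstoD[OF S2_real[OF a rv y(1) phi]] y(2) by blast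
  then show "eventually (\<lambda>i. b < \<tau> a (T (\<phi> i) * X i) / g (\<phi> i)) sequentially"
    using y(3) proof eventually_elim
    case (elim i)
    then show ?case using tau_mono_step[OF a y(1) X[of i], of "\<phi> i"] by linarith
  qed
qed

end



context sc begin

lemma TS_eq: "TS = {s\<in>S. tight A S r l s}"
  unfolding strats_def tight_groups_def tight_strats_def by auto

lemma TS_sub: "TS \<subseteq> S" using TS_eq by auto
lemma finite_TS: "finite TS" using TS_sub nf(2) finite_subset by blast
lemma At_sub: "At \<subseteq> A" unfolding tight_res_def by auto
lemma finite_At: "finite At" using At_sub nf(1) finite_subset by blast
lemma Gt_sub: "Gt \<subseteq> {..<K}" unfolding tight_groups_def by auto
lemma St_sub: "St k \<subseteq> Sg k" unfolding tight_strats_def by auto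
lemma St_eq: "St k = {s\<in>Sg k. tight A S r l s}" unfolding tight_strats_def by auto

lemma tight_At:
  assumes "s \<in> S" "tight A S r l s" "a \<in> A" "r a s > 0"
  shows "a \<in> At" "real_valued_on (Ires S r a) (l a)"
  using assms unfolding tight_res_def tight_def by auto

lemma At_rv: "a \<in> At \<Longrightarrow> real_valued_on (Ires S r a) (l a)"
  unfolding tight_res_def tight_def by auto

lemma nontight_inf:
  assumes "s \<in> S" "\<not> tight A S r l s"
  obtains a where "a \<in> A" "r a s > 0" "\<And>x. x \<in> Ires S r a \<Longrightarrow> x > 0 \<Longrightarrow> l a x = \<infinity>"
proof -
  obtain a where a: "a \<in> A" "r a s > 0" "\<not> real_valued_on (Ires S r a) (l a)"
    using assms unfolding tight_def by auto
  then have "\<forall>x\<in>Ires S r a. x > 0 \<longrightarrow> l a x = \<infinity>"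
    using S1[OF a(1)] unfolding limit_price_fun_def by auto
  then show ?thesis using that a by auto
qed

lemma feasN: "feasible {..<K} Sg (d i) (fN i)" using NE[of i] unfolding is_NE_def by auto
lemma feasS: "feasible {..<K} Sg (d i) (fS i)" using SO[of i] unfolding is_SO_def by auto
lemma dnn': "\<forall>k<K. 0 \<le> d i k" using dnn by auto

lemma lam_nonneg: assumes k: "k < K" shows "0 \<le> lam k"
proof (rule LIMSEQ_le_const[OF S0[OF k]])
  have "\<forall>n\<ge>0. 0 \<le> d n k / T n"
    using dnn[OF k] Tpos by (simp add: divide_nonneg_pos)
  then show "\<exists>N. \<forall>n\<ge>N. 0 \<le> d n k / T n" by blast
qed

lemma lam_sum: "(\<Sum>k<K. lam k) = 1"
proof -
  have "(\<lambda>i. \<Sum>k<K. d i k / T i) \<longlonglongrightarrow> (\<Sum>k<K. lam k)"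
    by (rule tendsto_sum) (use S0 in auto)
  moreover have "(\<Sum>k<K. d i k / T i) = 1" for i
    using Tpos[of i] Tdef[of i] unfolding total_def by (simp add: sum_divide_distrib[symmetric])
  ultimately have "(\<lambda>i. 1::real) \<longlonglongrightarrow> (\<Sum>k<K. lam k)" by simp
  then show ?thesis using LIMSEQ_unique[OF _ tendsto_const] by metis
qed

lemma norm_bounds:
  assumes "feasible {..<K} Sg (d i) F" "s \<in> S"
  shows "0 \<le> F s / T i" "F s / T i \<le> 1"
proof -
  have a: "0 \<le> F s" "F s \<le> T i"
    using feasible_le[OF ncg assms(1) dnn' assms(2)] Tdef[of i] by auto
  show "0 \<le> F s / T i" using a Tpos[of i] by simp
  show "F s / T i \<le> 1" using a Tpos[of i] by simp
qed

lemma load_norm_Ires: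
  assumes "feasible {..<K} Sg (d i) F" "a \<in> A" "S' \<subseteq> S"
  shows "load S' r F a / T i \<in> Ires S r a"
proof -
  have nn: "\<forall>s\<in>S. 0 \<le> F s" using assms(1) unfolding feasible_def by auto
  have "load S' r F a \<le> load S r F a" "0 \<le> load S' r F a"
    using load_sub_le[OF ncg assms(2) nn assms(3)] by auto
  moreover have "load S r F a \<le> Mx a * T i"
    using load_le[OF ncg assms(2) nn] feasible_sum[OF ncg assms(1)] Tdef[of i] by simp
  ultimately have "0 \<le> load S' r F a / T i" "load S' r F a / T i \<le> Mx a"
    using Tpos[of i] by (simp_all add: divide_le_eq mult.commute)
  then show ?thesis unfolding Ires_eq by simp
qed

lemma cost_nonneg_ge:
  assumes "feasible {..<K} Sg (d i) F"
  shows "0 \<le> cost A S r \<tau> F"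
    "A' \<subseteq> A \<Longrightarrow> (\<Sum>a\<in>A'. load S r F a * \<tau> a (load S r F a)) \<le> cost A S r \<tau> F"
proof -
  have nn: "\<forall>s\<in>S. 0 \<le> F s" using assms(1) unfolding feasible_def by auto
  have t: "\<And>a. a \<in> A \<Longrightarrow> 0 \<le> load S r F a * \<tau> a (load S r F a)"
    using load_nonneg[OF ncg _ nn] nf(9) by auto
  show "0 \<le> cost A S r \<tau> F" unfolding cost_def using t by (auto intro: sum_nonneg)
  show "A' \<subseteq> A \<Longrightarrow> (\<Sum>a\<in>A'. load S r F a * \<tau> a (load S r F a)) \<le> cost A S r \<tau> F"
    unfolding cost_def using t nf(1) by (intro sum_mono2) auto
qed

end



context sc begin

lemma nontight_vanish:
  assumes phi: "strict_mono \<phi>" and feas: "\<And>i. feasible {..<K} Sg (d (\<phi> i)) (F i)"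
    and bnd: "eventually (\<lambda>i. cost A S r \<tau> (F i) / (T (\<phi> i) * g (\<phi> i)) \<le> B) sequentially"
    and s: "s \<in> S" and nt: "\<not> tight A S r l s"
  shows "(\<lambda>i. F i s / T (\<phi> i)) \<longlonglongrightarrow> 0"
proof -
  obtain a where a: "a \<in> A" "r a s > 0" and inf: "\<And>x. x \<in> Ires S r a \<Longrightarrow> x > 0 \<Longrightarrow> l a x = \<infinity>"
    using nontight_inf[OF s nt] by blast
  show ?thesis
  proof (rule order_tendstoI)
    fix b :: real assume "b < 0"
    show "eventually (\<lambda>i. b < F i s / T (\<phi> i)) sequentially"
    proof (intro always_eventually allI)
      fix i show "b < F i s / T (\<phi> i)" using norm_bounds(1)[OF feas[of i] s] \<open>b < 0\<close> by linarith
    qed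
  next
    fix c :: real assume c: "0 < c"
    define c' where "c' = min c 1"
    define y where "y = r a s * c'"
    have c': "0 < c'" "c' \<le> 1" "c' \<le> c" using c unfolding c'_def by auto
    have ypos: "0 < y" using c' a unfolding y_def by simp
    have "r a s \<le> Mx a" using r_le_Max[OF ncg s] .
    moreover have "y \<le> r a s" unfolding y_def using mult_left_mono[OF c'(2), of "r a s"] a(2) by simp
    ultimately have yI: "y \<in> Ires S r a" unfolding Ires_eq using ypos by simp
    have "(\<lambda>i. ereal (\<tau> a (T i * y) / g i)) \<longlonglongrightarrow> \<infinity>" using S2[OF a(1) yI] inf[OF yI ypos] by simp
    from LIMSEQ_subseq_LIMSEQ[OF this phi]
    have Linf: "(\<lambda>i. ereal (\<tau> a (T (\<phi> i) * y) / g (\<phi> i))) \<longlonglongrightarrow> \<infinity>" by (simp add: o_def)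
    then have ev: "eventually (\<lambda>i. B / y + 1 < \<tau> a (T (\<phi> i) * y) / g (\<phi> i)) sequentially"
    proof -
      have "eventually (\<lambda>i. ereal (B / y + 1) < ereal (\<tau> a (T (\<phi> i) * y) / g (\<phi> i))) sequentially"
        using Linf unfolding tendsto_PInfty by blast
      then show ?thesis by simp
    qed
    show "eventually (\<lambda>i. F i s / T (\<phi> i) < c) sequentially"
      using ev bnd
    proof eventually_elim
      case (elim i)
      define j where "j = \<phi> i"
      have Tj: "0 < T j" and gj: "0 < g j" using Tpos gpos by auto
      have nn: "\<forall>s\<in>S. 0 \<le> F i s" using feas[of i] unfolding feasible_def by auto
      show ?case
      proof (rule ccontr)
        assume "\<not> F i s / T (\<phi> i) < c"
        then have "c' \<le> F i s / T j" using c' unfolding j_def by linarith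
        then have "c' * T j \<le> F i s" using Tj by (simp add: pos_le_divide_eq)
        then have "r a s * (c' * T j) \<le> r a s * F i s" using a by (simp add: mult_left_mono)
        also have "\<dots> \<le> load S r (F i) a" using load_ge[OF ncg a(1) nn s] .
        finally have L1: "T j * y \<le> load S r (F i) a" unfolding y_def by (simp add: mult_ac)
        have Ty0: "0 \<le> T j * y" using Tj ypos by simp
        have L0: "0 \<le> load S r (F i) a" using load_nonneg[OF ncg a(1) nn] .
        have L2: "\<tau> a (T j * y) \<le> \<tau> a (load S r (F i) a)"
        proof (rule mono_onD[OF nf(8)[OF a(1)]])
          show "T j * y \<in> {0..}" using Ty0 by simp
          show "load S r (F i) a \<in> {0..}" using L0 by simp
        qed (rule L1)
        have tau0: "0 \<le> \<tau> a (T j * y)" using nf(9)[OF a(1) Ty0] .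
        have "(T j * y) * \<tau> a (T j * y) \<le> load S r (F i) a * \<tau> a (load S r (F i) a)"
          by (rule mult_mono[OF L1 L2 L0 tau0])
        also have "\<dots> = (\<Sum>a'\<in>{a}. load S r (F i) a' * \<tau> a' (load S r (F i) a'))" by simp
        also have "\<dots> \<le> cost A S r \<tau> (F i)" using cost_nonneg_ge(2)[OF feas[of i], of "{a}"] a(1) by simp
        finally have C1: "(T j * y) * \<tau> a (T j * y) \<le> cost A S r \<tau> (F i)" .
        have "y * (\<tau> a (T j * y) / g j) = (T j * y) * \<tau> a (T j * y) / (T j * g j)"
          using Tj gj by (simp add: field_simps)
        also have "\<dots> \<le> cost A S r \<tau> (F i) / (T j * g j)"
          by (rule divide_right_mono[OF C1]) (rule less_imp_le[OF mult_pos_pos[OF Tj gj]])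
        also have "\<dots> \<le> B" using elim(2) unfolding j_def .
        finally have C2: "y * (\<tau> a (T j * y) / g j) \<le> B" .
        have "y * (B / y + 1) < y * (\<tau> a (T j * y) / g j)"
          using mult_strict_left_mono[OF elim(1) ypos] unfolding j_def .
        moreover have "y * (B / y + 1) = B + y" using ypos by (simp add: field_simps)
        ultimately show False using C2 ypos by linarith
      qed
    qed
  qed
qed

end



locale conv = sc A K Sg r \<tau> d T g lam l fN fS
  for A :: "'a set" and K :: nat and Sg :: "nat \<Rightarrow> 's set" and r \<tau> d T g lam l fN fS +
  fixes \<phi> :: "nat \<Rightarrow> nat" and F :: "nat \<Rightarrow> 's \<Rightarrow> real" and fi :: "'s \<Rightarrow> real"
  assumes phi: "strict_mono \<phi>"
    and feas: "\<And>i. feasible {..<K} Sg (d (\<phi> i)) (F i)"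
    and cnv: "\<And>s. s \<in> strats {..<K} Sg \<Longrightarrow> (\<lambda>i. F i s / T (\<phi> i)) \<longlonglongrightarrow> fi s"
begin

lemma nnF: "\<forall>s\<in>S. 0 \<le> F i s" using feas[of i] unfolding feasible_def by auto

lemma fi_nonneg: "s \<in> S \<Longrightarrow> 0 \<le> fi s"
  by (rule LIMSEQ_le_const[OF cnv]) (use norm_bounds(1)[OF feas] in auto)

lemma load_conv:
  assumes "S' \<subseteq> S"
  shows "(\<lambda>i. load S' r (F i) a / T (\<phi> i)) \<longlonglongrightarrow> load S' r fi a"
proof -
  have fin: "finite S'" using assms nf(2) finite_subset by blast
  have e: "load S' r (F i) a / T (\<phi> i) = (\<Sum>s\<in>S'. r a s * (F i s / T (\<phi> i)))" for i
    unfolding load_def sum_divide_distrib by simp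
  have "(\<lambda>i. \<Sum>s\<in>S'. r a s * (F i s / T (\<phi> i))) \<longlonglongrightarrow> (\<Sum>s\<in>S'. r a s * fi s)"
    by (rule tendsto_sum, rule tendsto_mult_left, rule cnv) (use assms in auto)
  then show ?thesis unfolding e[symmetric] load_def[of S' r fi a] .
qed

lemma load_lim_Ires:
  assumes "a \<in> A" "S' \<subseteq> S"
  shows "load S' r fi a \<in> Ires S r a"
proof (rule closed_sequentially[OF _ _ load_conv[OF assms(2)]])
  show "closed (Ires S r a)" unfolding Ires_eq by simp
  show "load S' r (F i) a / T (\<phi> i) \<in> Ires S r a" for i
    using load_norm_Ires[OF feas assms] .
qed

lemma price_conv:
  assumes s: "s \<in> S" and t: "tight A S r l s"
  shows "(\<lambda>i. sprice A S r \<tau> (F i) s / g (\<phi> i)) \<longlonglongrightarrow> (\<Sum>a\<in>A. r a s * lp a (load S r fi a))"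
proof -
  have e: "sprice A S r \<tau> (F i) s / g (\<phi> i) = (\<Sum>a\<in>A. r a s * (\<tau> a (load S r (F i) a) / g (\<phi> i)))" for i
    unfolding sprice_def sum_divide_distrib by simp
  show ?thesis unfolding e
  proof (rule tendsto_sum)
    fix a assume a: "a \<in> A"
    show "(\<lambda>i. r a s * (\<tau> a (load S r (F i) a) / g (\<phi> i))) \<longlonglongrightarrow> r a s * lp a (load S r fi a)"
    proof (cases "r a s > 0")
      case False
      then have "r a s = 0" using nf(6)[OF a s] by linarith
      then show ?thesis by simp
    next
      case True
      have rv: "real_valued_on (Ires S r a) (l a)" using tight_At(2)[OF s t a True] .
      have X: "load S r (F i) a / T (\<phi> i) \<in> Ires S r a" for i
        using load_norm_Ires[OF feas a] by simp
      have eq: "\<tau> a (load S r (F i) a) = \<tau> a (T (\<phi> i) * (load S r (F i) a / T (\<phi> i)))" for i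
        using Tpos[of "\<phi> i"] by simp
      have "(\<lambda>i. \<tau> a (T (\<phi> i) * (load S r (F i) a / T (\<phi> i))) / g (\<phi> i)) \<longlonglongrightarrow> lp a (load S r fi a)"
        by (rule tau_conv[OF a rv phi X load_conv load_lim_Ires[OF a]]) auto
      then show ?thesis unfolding eq by (rule tendsto_mult_left)
    qed
  qed
qed

lemma bounded_vanish:
  assumes bnd: "eventually (\<lambda>i. cost A S r \<tau> (F i) / (T (\<phi> i) * g (\<phi> i)) \<le> B) sequentially"
  shows "\<And>s. s \<in> S \<Longrightarrow> \<not> tight A S r l s \<Longrightarrow> fi s = 0"
proof -
  fix s assume s: "s \<in> S" "\<not> tight A S r l s"
  have "(\<lambda>i. F i s / T (\<phi> i)) \<longlonglongrightarrow> 0" by (rule nontight_vanish[OF phi feas bnd s])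
  then show "fi s = 0" using cnv[OF s(1)] LIMSEQ_unique by blast
qed

end



locale convb = conv +
  fixes B :: real
  assumes bnd: "eventually (\<lambda>i. cost A (strats {..<K} Sg) r \<tau> (F i) / (T (\<phi> i) * g (\<phi> i)) \<le> B) sequentially"
begin

lemma fi_zero: "s \<in> S \<Longrightarrow> \<not> tight A S r l s \<Longrightarrow> fi s = 0"
  using bounded_vanish[OF bnd] by blast

lemma load_TS: "load S r fi a = load TS r fi a"
  unfolding load_def
  by (rule sum.mono_neutral_right) (use nf(2) TS_sub TS_eq fi_zero in auto)

lemma sprice_lim:
  assumes s: "s \<in> S" and t: "tight A S r l s"
  shows "sprice At TS r lp fi s = (\<Sum>a\<in>A. r a s * lp a (load S r fi a))"
proof -
  have "sprice At TS r lp fi s = (\<Sum>a\<in>At. r a s * lp a (load S r fi a))"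
    unfolding sprice_def load_TS ..
  also have "\<dots> = (\<Sum>a\<in>A. r a s * lp a (load S r fi a))"
  proof (rule sum.mono_neutral_left)
    show "finite A" using nf(1) .
    show "At \<subseteq> A" using At_sub .
    show "\<forall>a\<in>A - At. r a s * lp a (load S r fi a) = 0"
    proof
      fix a assume a: "a \<in> A - At"
      have "\<not> r a s > 0" using tight_At(1)[OF s t] a by blast
      then have "r a s = 0" using nf(6)[of a s] a s by force
      then show "r a s * lp a (load S r fi a) = 0" by simp
    qed
  qed
  finally show ?thesis .
qed

lemma feasible_lim: "feasible Gt St lam fi"
  unfolding feasible_def
proof (intro conjI ballI)
  fix s assume "s \<in> TS"
  then show "0 \<le> fi s" using fi_nonneg TS_sub by blast
next
  fix k assume k: "k \<in> Gt"
  then have kK: "k < K" using Gt_sub by auto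
  have sub: "Sg k \<subseteq> S" using nf(5)[OF kK] .
  have "(\<lambda>i. \<Sum>s\<in>Sg k. F i s / T (\<phi> i)) \<longlonglongrightarrow> (\<Sum>s\<in>Sg k. fi s)"
    by (rule tendsto_sum, rule cnv) (use sub in auto)
  moreover have "(\<Sum>s\<in>Sg k. F i s / T (\<phi> i)) = d (\<phi> i) k / T (\<phi> i)" for i
    using feas[of i] kK unfolding feasible_def sum_divide_distrib[symmetric] by simp
  ultimately have l1: "(\<lambda>i. d (\<phi> i) k / T (\<phi> i)) \<longlonglongrightarrow> (\<Sum>s\<in>Sg k. fi s)" by simp
  have l2: "(\<lambda>i. d (\<phi> i) k / T (\<phi> i)) \<longlonglongrightarrow> lam k"
    using LIMSEQ_subseq_LIMSEQ[OF S0[OF kK] phi] by (simp add: o_def)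
  have "(\<Sum>s\<in>Sg k. fi s) = lam k" using LIMSEQ_unique[OF l1 l2] .
  moreover have "(\<Sum>s\<in>Sg k. fi s) = (\<Sum>s\<in>St k. fi s)"
    by (rule sum.mono_neutral_right)
       (use nf(3)[OF kK] St_sub St_eq fi_zero sub in auto)
  ultimately show "sum fi (St k) = lam k" by simp
qed

end



context sc begin

lemma sprice_nonneg:
  assumes "feasible {..<K} Sg (d j) F" "s \<in> S"
  shows "0 \<le> sprice A S r \<tau> F s"
proof -
  have nn: "\<forall>s\<in>S. 0 \<le> F s" using assms(1) unfolding feasible_def by auto
  show ?thesis unfolding sprice_def
  proof (rule sum_nonneg)
    fix a assume a: "a \<in> A"
    have "0 \<le> \<tau> a (load S r F a)" using nf(9)[OF a load_nonneg[OF ncg a nn]] .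
    then show "0 \<le> r a s * \<tau> a (load S r F a)" using nf(6)[OF a assms(2)] by simp
  qed
qed

lemma NE_term_le:
  assumes k: "k < K" and s: "s \<in> Sg k" and s': "s' \<in> Sg k"
  shows "fN j s * sprice A S r \<tau> (fN j) s \<le> fN j s * sprice A S r \<tau> (fN j) s'"
proof (cases "fN j s > 0")
  case True
  then have "sprice A S r \<tau> (fN j) s \<le> sprice A S r \<tau> (fN j) s'"
    using NE[of j] k s s' unfolding is_NE_def by auto
  then show ?thesis using True by (simp add: mult_left_mono)
next
  case False
  have "s \<in> S" using nf(5)[OF k] s by auto
  then have "fN j s = 0" using False feasN[of j] unfolding feasible_def by force
  then show ?thesis by simp
qed

lemma G_le:
  assumes k: "k < K" and s': "s' \<in> Sg k"
  shows "(\<Sum>s\<in>Sg k. fN j s * sprice A S r \<tau> (fN j) s) \<le> d j k * sprice A S r \<tau> (fN j) s'"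
proof -
  have "(\<Sum>s\<in>Sg k. fN j s * sprice A S r \<tau> (fN j) s) \<le> (\<Sum>s\<in>Sg k. fN j s * sprice A S r \<tau> (fN j) s')"
    by (rule sum_mono) (rule NE_term_le[OF k _ s'])
  also have "\<dots> = d j k * sprice A S r \<tau> (fN j) s'"
    using feasN[of j] k unfolding feasible_def sum_distrib_right[symmetric] by simp
  finally show ?thesis .
qed

lemma cost_groups:
  "cost A S r \<tau> F = (\<Sum>k<K. \<Sum>s\<in>Sg k. F s * sprice A S r \<tau> F s)"
  unfolding cost_strat[OF nf(1) nf(2)] sum_groups[OF ncg] ..

end



context sc begin

lemma NE_limit:
  obtains \<phi> fi where "strict_mono \<phi>"
    "\<And>s. s \<in> S \<Longrightarrow> (\<lambda>i. fN (\<phi> i) s / T (\<phi> i)) \<longlonglongrightarrow> fi s"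
    "is_NE At Gt St r lp lam fi"
    "(\<lambda>i. cost A S r \<tau> (fN (\<phi> i)) / (T (\<phi> i) * g (\<phi> i))) \<longlonglongrightarrow> cost At TS r lp fi"
proof -
  have bd: "\<bar>fN i s / T i\<bar> \<le> 1" if "s \<in> S" for i s
  proof -
    have h: "0 \<le> fN i s / T i" "fN i s / T i \<le> 1" using norm_bounds[OF feasN[of i] that] by auto
    show ?thesis by (simp only: abs_of_nonneg[OF h(1)] h(2))
  qed
  obtain \<phi> where \<phi>: "strict_mono \<phi>" "\<forall>s\<in>S. convergent (\<lambda>i. fN (\<phi> i) s / T (\<phi> i))"
    using bolzano_finite[OF nf(2), of "\<lambda>i s. fN i s / T i" 1] bd by blast
  define fi where "fi s = lim (\<lambda>i. fN (\<phi> i) s / T (\<phi> i))" for s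
  have cnv: "(\<lambda>i. fN (\<phi> i) s / T (\<phi> i)) \<longlonglongrightarrow> fi s" if "s \<in> S" for s
    using \<phi>(2) that unfolding fi_def by (simp add: convergent_LIMSEQ_iff)
  interpret C: conv A K Sg r \<tau> d T g lam l fN fS \<phi> "\<lambda>i. fN (\<phi> i)" fi
    by unfold_locales (use \<phi>(1) feasN cnv in auto)
  define G where "G k j = (\<Sum>s\<in>Sg k. fN j s * sprice A S r \<tau> (fN j) s)" for k j
  define P where "P s = (\<Sum>a\<in>A. r a s * lp a (load S r fi a))" for s
  have Gle: "G k j / (T j * g j) \<le> sprice A S r \<tau> (fN j) s' / g j"
    if k: "k < K" and s': "s' \<in> Sg k" for k j s'
  proof -
    have s'S: "s' \<in> S" using nf(5)[OF k] s' by auto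
    have sp0: "0 \<le> sprice A S r \<tau> (fN j) s'" using sprice_nonneg[OF feasN s'S] .
    have "d j k \<le> T j" unfolding Tdef total_def
      by (rule member_le_sum) (use k dnn in auto)
    then have "G k j \<le> T j * sprice A S r \<tau> (fN j) s'"
      using G_le[OF k s', of j] mult_right_mono[OF _ sp0] unfolding G_def by (meson order_trans)
    then have "G k j / (T j * g j) \<le> T j * sprice A S r \<tau> (fN j) s' / (T j * g j)"
      by (rule divide_right_mono) (rule less_imp_le[OF mult_pos_pos[OF Tpos gpos]])
    also have "\<dots> = sprice A S r \<tau> (fN j) s' / g j" using Tpos[of j] by simp
    finally show ?thesis .
  qed
  have "\<forall>k. \<exists>Bk. k < K \<longrightarrow> eventually (\<lambda>i. G k (\<phi> i) / (T (\<phi> i) * g (\<phi> i)) \<le> Bk) sequentially"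
  proof
    fix k show "\<exists>Bk. k < K \<longrightarrow> eventually (\<lambda>i. G k (\<phi> i) / (T (\<phi> i) * g (\<phi> i)) \<le> Bk) sequentially"
    proof (cases "k < K")
      case False then show ?thesis by blast
    next
      case k: True
      show ?thesis
      proof (cases "\<exists>s\<in>Sg k. tight A S r l s")
        case True
        then obtain s' where s': "s' \<in> Sg k" "tight A S r l s'" by blast
        have s'S: "s' \<in> S" using nf(5)[OF k] s' by auto
        have "eventually (\<lambda>i. sprice A S r \<tau> (fN (\<phi> i)) s' / g (\<phi> i) < P s' + 1) sequentially"
          using order_tendstoD(2)[OF C.price_conv[OF s'S s'(2)]] unfolding P_def by simp
        then have "eventually (\<lambda>i. G k (\<phi> i) / (T (\<phi> i) * g (\<phi> i)) \<le> P s' + 1) sequentially"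
          by (rule eventually_mono) (use Gle[OF k s'(1)] in \<open>meson less_imp_le order_trans\<close>)
        then show ?thesis by blast
      next
        case False
        then have "(\<lambda>i. G k i / (T i * g i)) \<longlonglongrightarrow> 0" using S3[OF k] unfolding G_def by blast
        from LIMSEQ_subseq_LIMSEQ[OF this \<phi>(1)]
        have "(\<lambda>i. G k (\<phi> i) / (T (\<phi> i) * g (\<phi> i))) \<longlonglongrightarrow> 0" by (simp add: o_def)
        from order_tendstoD(2)[OF this, of 1]
        have "eventually (\<lambda>i. G k (\<phi> i) / (T (\<phi> i) * g (\<phi> i)) \<le> 1) sequentially"
          by (simp add: eventually_mono)
        then show ?thesis by blast
      qed
    qed
  qed
  then obtain Bf where Bf: "\<And>k. k < K \<Longrightarrow> eventually (\<lambda>i. G k (\<phi> i) / (T (\<phi> i) * g (\<phi> i)) \<le> Bf k) sequentially"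
    by metis
  have costG: "cost A S r \<tau> (fN j) / (T j * g j) = (\<Sum>k<K. G k j / (T j * g j))" for j
    unfolding cost_groups G_def sum_divide_distrib ..
  have "eventually (\<lambda>i. \<forall>k\<in>{..<K}. G k (\<phi> i) / (T (\<phi> i) * g (\<phi> i)) \<le> Bf k) sequentially"
    by (rule eventually_ball_finite) (use Bf in auto)
  then have bndN: "eventually (\<lambda>i. cost A S r \<tau> (fN (\<phi> i)) / (T (\<phi> i) * g (\<phi> i)) \<le> (\<Sum>k<K. Bf k)) sequentially"
    by (rule eventually_mono) (simp only: costG, rule sum_mono, blast)
  interpret CB: convb A K Sg r \<tau> d T g lam l fN fS \<phi> "\<lambda>i. fN (\<phi> i)" fi "\<Sum>k<K. Bf k"
    by unfold_locales (rule bndN)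
  have inS: "s \<in> S" if "k \<in> Gt" "s \<in> St k" for k s
    using that Gt_sub St_sub nf(5) by blast
  have NEl: "is_NE At Gt St r lp lam fi"
    unfolding is_NE_def
  proof (intro conjI ballI impI)
    show "feasible Gt St lam fi" by (rule CB.feasible_lim)
    fix k s s' assume k: "k \<in> Gt" and s: "s \<in> St k" and s': "s' \<in> St k" and pos: "0 < fi s"
    have kK: "k < K" using k Gt_sub by auto
    have sS: "s \<in> S" and s'S: "s' \<in> S" using inS k s s' by auto
    have sk: "s \<in> Sg k" "s' \<in> Sg k" using s s' St_sub by auto
    have ts: "tight A S r l s" "tight A S r l s'" using s s' St_eq by auto
    have "eventually (\<lambda>i. 0 < fN (\<phi> i) s / T (\<phi> i)) sequentially"
      by (rule order_tendstoD(1)[OF cnv[OF sS] pos])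
    then have ev: "eventually (\<lambda>i. sprice A S r \<tau> (fN (\<phi> i)) s / g (\<phi> i)
                     \<le> sprice A S r \<tau> (fN (\<phi> i)) s' / g (\<phi> i)) sequentially"
    proof (rule eventually_mono)
      fix i assume "0 < fN (\<phi> i) s / T (\<phi> i)"
      then have "0 < fN (\<phi> i) s" using Tpos[of "\<phi> i"] by (simp add: zero_less_divide_iff)
      then have "sprice A S r \<tau> (fN (\<phi> i)) s \<le> sprice A S r \<tau> (fN (\<phi> i)) s'"
        using NE[of "\<phi> i"] kK sk unfolding is_NE_def by auto
      then show "sprice A S r \<tau> (fN (\<phi> i)) s / g (\<phi> i) \<le> sprice A S r \<tau> (fN (\<phi> i)) s' / g (\<phi> i)"
        by (rule divide_right_mono) (rule less_imp_le[OF gpos])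
    qed
    have "P s \<le> P s'" unfolding P_def
      by (rule tendsto_le[OF trivial_limit_sequentially C.price_conv[OF s'S ts(2)] C.price_conv[OF sS ts(1)] ev])
    then show "sprice At TS r lp fi s \<le> sprice At TS r lp fi s'"
      unfolding CB.sprice_lim[OF sS ts(1)] CB.sprice_lim[OF s'S ts(2)] P_def .
  qed
  define H where "H k = (\<Sum>s\<in>Sg k. if tight A S r l s then fi s * P s else 0)" for k
  have Hlim: "(\<lambda>i. G k (\<phi> i) / (T (\<phi> i) * g (\<phi> i))) \<longlonglongrightarrow> H k" if k: "k < K" for k
  proof (cases "\<exists>s\<in>Sg k. tight A S r l s")
    case True
    then obtain s' where s': "s' \<in> Sg k" "tight A S r l s'" by blast
    have s'S: "s' \<in> S" using nf(5)[OF k] s' by auto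
    have e: "G k j / (T j * g j) = (\<Sum>s\<in>Sg k. (fN j s / T j) * (sprice A S r \<tau> (fN j) s / g j))" for j
      unfolding G_def sum_divide_distrib by simp
    show ?thesis unfolding e H_def
    proof (rule tendsto_sum)
      fix s assume s: "s \<in> Sg k"
      have sS: "s \<in> S" using nf(5)[OF k] s by auto
      show "(\<lambda>i. (fN (\<phi> i) s / T (\<phi> i)) * (sprice A S r \<tau> (fN (\<phi> i)) s / g (\<phi> i)))
              \<longlonglongrightarrow> (if tight A S r l s then fi s * P s else 0)"
      proof (cases "tight A S r l s")
        case True
        show ?thesis using tendsto_mult[OF cnv[OF sS] C.price_conv[OF sS True]] True
          unfolding P_def by simp
      next
        case False
        have up: "(\<lambda>i. (fN (\<phi> i) s / T (\<phi> i)) * (sprice A S r \<tau> (fN (\<phi> i)) s' / g (\<phi> i))) \<longlonglongrightarrow> 0"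
          using tendsto_mult[OF cnv[OF sS] C.price_conv[OF s'S s'(2)]] CB.fi_zero[OF sS False] by simp
        have lo: "0 \<le> (fN j s / T j) * (sprice A S r \<tau> (fN j) s / g j)" for j
          by (rule mult_nonneg_nonneg[OF norm_bounds(1)[OF feasN sS, of j] divide_nonneg_pos[OF sprice_nonneg[OF feasN sS, of j] gpos[of j]]])
        have hi: "(fN j s / T j) * (sprice A S r \<tau> (fN j) s / g j) \<le>
                  (fN j s / T j) * (sprice A S r \<tau> (fN j) s' / g j)" for j
        proof -
          have "fN j s * sprice A S r \<tau> (fN j) s \<le> fN j s * sprice A S r \<tau> (fN j) s'"
            by (rule NE_term_le[OF k s s'(1)])
          then have "fN j s * sprice A S r \<tau> (fN j) s / (T j * g j) \<le> fN j s * sprice A S r \<tau> (fN j) s' / (T j * g j)"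
            by (rule divide_right_mono) (rule less_imp_le[OF mult_pos_pos[OF Tpos gpos]])
          then show ?thesis by simp
        qed
        have "(\<lambda>i. (fN (\<phi> i) s / T (\<phi> i)) * (sprice A S r \<tau> (fN (\<phi> i)) s / g (\<phi> i))) \<longlonglongrightarrow> 0"
          by (rule tendsto_sandwich[OF always_eventually always_eventually tendsto_const up])
             (use lo hi in blast)+
        then show ?thesis using False by simp
      qed
    qed
  next
    case False
    then have "(\<lambda>i. G k i / (T i * g i)) \<longlonglongrightarrow> 0" using S3[OF k] unfolding G_def by blast
    from LIMSEQ_subseq_LIMSEQ[OF this \<phi>(1)]
    have "(\<lambda>i. G k (\<phi> i) / (T (\<phi> i) * g (\<phi> i))) \<longlonglongrightarrow> 0" by (simp add: o_def)
    moreover have "H k = 0" unfolding H_def using False by (intro sum.neutral) auto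
    ultimately show ?thesis by simp
  qed
  have "(\<lambda>i. cost A S r \<tau> (fN (\<phi> i)) / (T (\<phi> i) * g (\<phi> i))) \<longlonglongrightarrow> (\<Sum>k<K. H k)"
    unfolding costG by (rule tendsto_sum) (use Hlim in auto)
  moreover have "(\<Sum>k<K. H k) = cost At TS r lp fi"
  proof -
    have "(\<Sum>k<K. H k) = (\<Sum>s\<in>S. if tight A S r l s then fi s * P s else 0)"
      unfolding H_def sum_groups[OF ncg] ..
    also have "\<dots> = (\<Sum>s\<in>TS. fi s * P s)"
      unfolding TS_eq by (rule sum.inter_filter[symmetric]) (rule nf(2))
    also have "\<dots> = (\<Sum>s\<in>TS. fi s * sprice At TS r lp fi s)"
      by (rule sum.cong) (use CB.sprice_lim TS_eq in \<open>auto simp: P_def\<close>)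
    also have "\<dots> = cost At TS r lp fi" using cost_strat[OF finite_At finite_TS] by simp
    finally show ?thesis .
  qed
  ultimately show ?thesis using that[OF \<phi>(1) cnv NEl] by simp
qed

end



context sc begin

lemma TS_union: "TS = (\<Union>k\<in>Gt. St k)" unfolding strats_def ..

lemma sum_TS: "sum h TS = (\<Sum>k\<in>Gt. sum h (St k))"
  unfolding TS_union
proof (rule sum.UNION_disjoint)
  show "finite Gt" using Gt_sub finite_subset by blast
  show "\<forall>k\<in>Gt. finite (St k)" using Gt_sub St_sub nf(3) finite_subset by blast
  show "\<forall>k\<in>Gt. \<forall>k'\<in>Gt. k \<noteq> k' \<longrightarrow> St k \<inter> St k' = {}"
    using Gt_sub St_sub nf(10) by blast
qed

lemma lam_le1: "k < K \<Longrightarrow> lam k \<le> 1"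
  using member_le_sum[of k "{..<K}" lam] lam_nonneg lam_sum by auto

lemma limfeas_bounds:
  assumes h: "feasible Gt St lam h" and s: "s \<in> TS"
  shows "0 \<le> h s" "h s \<le> 1"
proof -
  show h0: "0 \<le> h s" using h s unfolding feasible_def by auto
  obtain k where k: "k \<in> Gt" "s \<in> St k" using s unfolding TS_union by auto
  have kK: "k < K" using k Gt_sub by auto
  have "h s \<le> sum h (St k)"
  proof (rule member_le_sum)
    show "finite (St k)" using St_sub nf(3)[OF kK] finite_subset by blast
    show "s \<in> St k" by fact
    fix x assume "x \<in> St k - {s}"
    then have "x \<in> TS" using k unfolding TS_union by auto
    then show "0 \<le> h x" using h unfolding feasible_def by auto
  qed
  also have "\<dots> = lam k" using h k unfolding feasible_def by auto
  also have "\<dots> \<le> 1" using lam_le1[OF kK] .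
  finally show "h s \<le> 1" .
qed

lemma limfeas_load_Ires:
  assumes h: "feasible Gt St lam h" and a: "a \<in> At"
  shows "load TS r h a \<in> Ires S r a"
proof -
  have aA: "a \<in> A" using a At_sub by auto
  have nn: "\<And>s. s \<in> TS \<Longrightarrow> 0 \<le> h s" using limfeas_bounds(1)[OF h] .
  have r0: "\<And>s. s \<in> TS \<Longrightarrow> 0 \<le> r a s" using nf(6)[OF aA] TS_sub by auto
  have "0 \<le> load TS r h a" unfolding load_def using nn r0 by (simp add: sum_nonneg)
  moreover have "load TS r h a \<le> (\<Sum>s\<in>TS. Mx a * h s)" unfolding load_def
    by (rule sum_mono, rule mult_right_mono) (use r_le_Max[OF ncg] TS_sub nn in auto)
  moreover have "(\<Sum>s\<in>TS. Mx a * h s) = Mx a * (\<Sum>k\<in>Gt. lam k)"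
    unfolding sum_distrib_left[symmetric] sum_TS using h unfolding feasible_def by simp
  moreover have "(\<Sum>k\<in>Gt. lam k) \<le> 1"
  proof -
    have "(\<Sum>k\<in>Gt. lam k) \<le> (\<Sum>k<K. lam k)"
      by (rule sum_mono2) (use Gt_sub lam_nonneg in auto)
    then show ?thesis using lam_sum by simp
  qed
  moreover have "0 \<le> Mx a" using Max_pos[OF ncg aA] by simp
  ultimately have "load TS r h a \<le> Mx a"
    by (smt (verit) mult_left_le)
  then show ?thesis unfolding Ires_eq using \<open>0 \<le> load TS r h a\<close> by simp
qed

lemma limcost_nonneg:
  assumes h: "feasible Gt St lam h"
  shows "0 \<le> cost At TS r lp h"
  unfolding cost_def
proof (rule sum_nonneg)
  fix a assume a: "a \<in> At"
  have aA: "a \<in> A" using a At_sub by auto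
  have I: "load TS r h a \<in> Ires S r a" using limfeas_load_Ires[OF h a] .
  then have "0 \<le> load TS r h a" unfolding Ires_eq by simp
  moreover have "0 \<le> lp a (load TS r h a)" using rv_props(2)[OF aA At_rv[OF a] I] .
  ultimately show "0 \<le> load TS r h a * lp a (load TS r h a)" by simp
qed

lemma limcost_cont:
  assumes H: "\<And>n. feasible Gt St lam (H n)" and h: "feasible Gt St lam h"
    and c: "\<And>s. s \<in> TS \<Longrightarrow> (\<lambda>n. H n s) \<longlonglongrightarrow> h s"
  shows "(\<lambda>n. cost At TS r lp (H n)) \<longlonglongrightarrow> cost At TS r lp h"
  unfolding cost_def
proof (rule tendsto_sum)
  fix a assume a: "a \<in> At"
  have aA: "a \<in> A" using a At_sub by auto
  have L: "(\<lambda>n. load TS r (H n) a) \<longlonglongrightarrow> load TS r h a"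
    unfolding load_def by (rule tendsto_sum, rule tendsto_mult_left, rule c)
  have "(\<lambda>n. lp a (load TS r (H n) a)) \<longlonglongrightarrow> lp a (load TS r h a)"
    by (rule continuous_on_tendsto_compose[OF rv_props(3)[OF aA At_rv[OF a]] L limfeas_load_Ires[OF h a]])
       (use limfeas_load_Ires[OF H a] in auto)
  then show "(\<lambda>n. load TS r (H n) a * lp a (load TS r (H n) a)) \<longlonglongrightarrow> load TS r h a * lp a (load TS r h a)"
    by (rule tendsto_mult[OF L])
qed

end



context sc begin

lemma limSO_exists:
  assumes f0: "feasible Gt St lam f0"
  obtains h where "is_SO At Gt St r lp lam h"
proof -
  define C where "C = (\<lambda>h. cost At TS r lp h) ` {h. feasible Gt St lam h}"
  define m where "m = Inf C"
  have Cne: "C \<noteq> {}" using f0 unfolding C_def by auto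
  have Cbdd: "bdd_below C" unfolding C_def bdd_below_def using limcost_nonneg by blast
  have "\<forall>n. \<exists>h. feasible Gt St lam h \<and> cost At TS r lp h < m + inverse (real (Suc n))"
  proof
    fix n
    have "Inf C < m + inverse (real (Suc n))" unfolding m_def by simp
    from cInf_lessD[OF Cne this] show "\<exists>h. feasible Gt St lam h \<and> cost At TS r lp h < m + inverse (real (Suc n))"
      unfolding C_def by auto
  qed
  then obtain H where H: "\<And>n. feasible Gt St lam (H n)" "\<And>n. cost At TS r lp (H n) < m + inverse (real (Suc n))"
    by metis
  have bd: "\<bar>H n s\<bar> \<le> 1" if "s \<in> TS" for n s
  proof -
    have h: "0 \<le> H n s" "H n s \<le> 1" using limfeas_bounds[OF H(1) that] by auto
    show ?thesis by (simp only: abs_of_nonneg[OF h(1)] h(2))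
  qed
  obtain \<phi> where \<phi>: "strict_mono \<phi>" "\<forall>s\<in>TS. convergent (\<lambda>i. H (\<phi> i) s)"
    using bolzano_finite[OF finite_TS, of H 1] bd by blast
  define h where "h s = lim (\<lambda>i. H (\<phi> i) s)" for s
  have cnv: "(\<lambda>i. H (\<phi> i) s) \<longlonglongrightarrow> h s" if "s \<in> TS" for s
    using \<phi>(2) that unfolding h_def by (simp add: convergent_LIMSEQ_iff)
  have hfeas: "feasible Gt St lam h"
    unfolding feasible_def
  proof (intro conjI ballI)
    fix s assume s: "s \<in> TS"
    show "0 \<le> h s" by (rule LIMSEQ_le_const[OF cnv[OF s]]) (use limfeas_bounds(1)[OF H(1) s] in auto)
  next
    fix k assume k: "k \<in> Gt"
    have sub: "St k \<subseteq> TS" using k unfolding TS_union by auto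
    have "(\<lambda>i. sum (H (\<phi> i)) (St k)) \<longlonglongrightarrow> sum h (St k)"
      by (rule tendsto_sum, rule cnv) (use sub in auto)
    moreover have "sum (H (\<phi> i)) (St k) = lam k" for i using H(1)[of "\<phi> i"] k unfolding feasible_def by auto
    ultimately have "(\<lambda>i. lam k) \<longlonglongrightarrow> sum h (St k)" by simp
    then show "sum h (St k) = lam k" using LIMSEQ_unique[OF _ tendsto_const] by metis
  qed
  have c1: "(\<lambda>i. cost At TS r lp (H (\<phi> i))) \<longlonglongrightarrow> cost At TS r lp h"
    by (rule limcost_cont[OF H(1) hfeas cnv])
  have lo: "m \<le> cost At TS r lp (H n)" for n
    unfolding m_def by (rule cInf_lower[OF _ Cbdd]) (use H(1) in \<open>auto simp: C_def\<close>)
  have up: "(\<lambda>i. m + inverse (real (Suc (\<phi> i)))) \<longlonglongrightarrow> m"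
    using LIMSEQ_subseq_LIMSEQ[OF LIMSEQ_inverse_real_of_nat_add[of m] \<phi>(1)] by (simp add: o_def)
  have c2: "(\<lambda>i. cost At TS r lp (H (\<phi> i))) \<longlonglongrightarrow> m"
    by (rule tendsto_sandwich[OF always_eventually always_eventually tendsto_const up])
       (use lo H(2) less_imp_le in blast)+
  have hm: "cost At TS r lp h = m" using LIMSEQ_unique[OF c1 c2] .
  have "is_SO At Gt St r lp lam h"
    unfolding is_SO_def
  proof (intro conjI allI impI)
    show "feasible Gt St lam h" by (rule hfeas)
    fix h' assume "feasible Gt St lam h'"
    then show "cost At TS r lp h \<le> cost At TS r lp h'"
      unfolding hm m_def by (intro cInf_lower[OF _ Cbdd]) (auto simp: C_def)
  qed
  then show ?thesis by (rule that)
qed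

end



lemma div_div_same: "(c::real) \<noteq> 0 \<Longrightarrow> (x / c) / (y / c) = x / y"
  by (cases "y = 0") (auto simp: field_simps)

context sc begin

lemma main_sub:
  "\<exists>\<psi>. strict_mono \<psi> \<and>
      (\<lambda>i. cost A S r \<tau> (fN (\<psi> i)) / cost A S r \<tau> (fS (\<psi> i))) \<longlonglongrightarrow> 1"
proof -
  obtain \<phi>1 fi where p1: "strict_mono \<phi>1"
    "\<And>s. s \<in> S \<Longrightarrow> (\<lambda>i. fN (\<phi>1 i) s / T (\<phi>1 i)) \<longlonglongrightarrow> fi s"
    "is_NE At Gt St r lp lam fi"
    "(\<lambda>i. cost A S r \<tau> (fN (\<phi>1 i)) / (T (\<phi>1 i) * g (\<phi>1 i))) \<longlonglongrightarrow> cost At TS r lp fi"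
    using NE_limit by blast
  define L where "L = cost At TS r lp fi"
  have Lpos: "0 < L" unfolding L_def using S5[OF p1(3)] .
  have fifeas: "feasible Gt St lam fi" using p1(3) unfolding is_NE_def by auto
  obtain hs where hs: "is_SO At Gt St r lp lam hs" using limSO_exists[OF fifeas] by blast
  have Lhs: "L = cost At TS r lp hs" unfolding L_def using S4 p1(3) hs by blast
  have Lmin: "L \<le> cost At TS r lp h" if "feasible Gt St lam h" for h
    using hs that unfolding Lhs is_SO_def by auto
  have SleN: "cost A S r \<tau> (fS j) \<le> cost A S r \<tau> (fN j)" for j
    using SO[of j] feasN[of j] unfolding is_SO_def by auto
  have SleN': "cost A S r \<tau> (fS j) / (T j * g j) \<le> cost A S r \<tau> (fN j) / (T j * g j)" for j
    by (rule divide_right_mono[OF SleN]) (rule less_imp_le[OF mult_pos_pos[OF Tpos gpos]])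
  have evN: "eventually (\<lambda>i. cost A S r \<tau> (fN (\<phi>1 i)) / (T (\<phi>1 i) * g (\<phi>1 i)) < L + 1) sequentially"
    using order_tendstoD(2)[OF p1(4)] unfolding L_def by simp
  have bd: "\<bar>fS i s / T i\<bar> \<le> 1" if "s \<in> S" for i s
  proof -
    have h: "0 \<le> fS i s / T i" "fS i s / T i \<le> 1" using norm_bounds[OF feasS[of i] that] by auto
    show ?thesis by (simp only: abs_of_nonneg[OF h(1)] h(2))
  qed
  obtain \<phi>2 where p2: "strict_mono \<phi>2" "\<forall>s\<in>S. convergent (\<lambda>i. fS (\<phi>1 (\<phi>2 i)) s / T (\<phi>1 (\<phi>2 i)))"
    using bolzano_finite[OF nf(2), of "\<lambda>i s. fS (\<phi>1 i) s / T (\<phi>1 i)" 1] bd by blast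
  define \<phi> where "\<phi> = \<phi>1 \<circ> \<phi>2"
  have phi: "strict_mono \<phi>" unfolding \<phi>_def using strict_mono_o p1(1) p2(1) by blast
  define hi where "hi s = lim (\<lambda>i. fS (\<phi> i) s / T (\<phi> i))" for s
  have cnv: "(\<lambda>i. fS (\<phi> i) s / T (\<phi> i)) \<longlonglongrightarrow> hi s" if "s \<in> S" for s
    using p2(2) that unfolding hi_def \<phi>_def by (simp add: convergent_LIMSEQ_iff)
  have NEphi: "(\<lambda>i. cost A S r \<tau> (fN (\<phi> i)) / (T (\<phi> i) * g (\<phi> i))) \<longlonglongrightarrow> L"
    using LIMSEQ_subseq_LIMSEQ[OF p1(4) p2(1)] unfolding L_def \<phi>_def by (simp add: o_def)
  have bndS: "eventually (\<lambda>i. cost A S r \<tau> (fS (\<phi> i)) / (T (\<phi> i) * g (\<phi> i)) \<le> L + 1) sequentially"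
    using eventually_subseq[OF evN p2(1)] unfolding \<phi>_def o_def
    by (rule eventually_mono) (use SleN' in \<open>meson less_imp_le order_trans\<close>)
  interpret CB: convb A K Sg r \<tau> d T g lam l fN fS \<phi> "\<lambda>i. fS (\<phi> i)" hi "L + 1"
    by unfold_locales (use phi feasS cnv bndS in auto)
  have hifeas: "feasible Gt St lam hi" by (rule CB.feasible_lim)
  define Y where "Y a i = load TS r (fS (\<phi> i)) a / T (\<phi> i)" for a i
  have lower: "(\<Sum>a\<in>At. Y a i * (\<tau> a (T (\<phi> i) * Y a i) / g (\<phi> i)))
       \<le> cost A S r \<tau> (fS (\<phi> i)) / (T (\<phi> i) * g (\<phi> i))" for i
  proof -
    define j where "j = \<phi> i"
    have Tj: "0 < T j" and gj: "0 < g j" using Tpos gpos by auto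
    have nn: "\<forall>s\<in>S. 0 \<le> fS j s" using feasS[of j] unfolding feasible_def by auto
    have eqY: "T j * Y a i = load TS r (fS j) a" for a unfolding Y_def j_def using Tj j_def by simp
    have trm: "load TS r (fS j) a * \<tau> a (load TS r (fS j) a) \<le> load S r (fS j) a * \<tau> a (load S r (fS j) a)"
      if a: "a \<in> A" for a
    proof -
      have l1: "load TS r (fS j) a \<le> load S r (fS j) a" "0 \<le> load TS r (fS j) a"
        using load_sub_le[OF ncg a nn TS_sub] by auto
      have l2: "\<tau> a (load TS r (fS j) a) \<le> \<tau> a (load S r (fS j) a)"
        by (rule mono_onD[OF nf(8)[OF a]]) (use l1 in auto)
      have l3: "0 \<le> \<tau> a (load TS r (fS j) a)" using nf(9)[OF a l1(2)] .
      show ?thesis by (rule mult_mono[OF l1(1) l2]) (use l1 l3 in auto)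
    qed
    have "(\<Sum>a\<in>At. load TS r (fS j) a * \<tau> a (load TS r (fS j) a))
        \<le> (\<Sum>a\<in>At. load S r (fS j) a * \<tau> a (load S r (fS j) a))"
      by (rule sum_mono) (use trm At_sub in blast)
    also have "\<dots> \<le> cost A S r \<tau> (fS j)" by (rule cost_nonneg_ge(2)[OF feasS At_sub])
    finally have c: "(\<Sum>a\<in>At. load TS r (fS j) a * \<tau> a (load TS r (fS j) a)) \<le> cost A S r \<tau> (fS j)" .
    have "(\<Sum>a\<in>At. Y a i * (\<tau> a (T j * Y a i) / g j))
        = (\<Sum>a\<in>At. load TS r (fS j) a * \<tau> a (load TS r (fS j) a)) / (T j * g j)"
      unfolding sum_divide_distrib eqY[symmetric] using Tj gj by (intro sum.cong) (auto simp: field_simps)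
    also have "\<dots> \<le> cost A S r \<tau> (fS j) / (T j * g j)"
      by (rule divide_right_mono[OF c]) (rule less_imp_le[OF mult_pos_pos[OF Tj gj]])
    finally show ?thesis unfolding j_def .
  qed
  have lowlim: "(\<lambda>i. \<Sum>a\<in>At. Y a i * (\<tau> a (T (\<phi> i) * Y a i) / g (\<phi> i))) \<longlonglongrightarrow> cost At TS r lp hi"
    unfolding cost_def
  proof (rule tendsto_sum)
    fix a assume a: "a \<in> At"
    have aA: "a \<in> A" using a At_sub by auto
    have Yc: "Y a \<longlonglongrightarrow> load TS r hi a" unfolding Y_def by (rule CB.load_conv[OF TS_sub])
    have YI: "Y a i \<in> Ires S r a" for i unfolding Y_def by (rule load_norm_Ires[OF feasS aA TS_sub])
    show "(\<lambda>i. Y a i * (\<tau> a (T (\<phi> i) * Y a i) / g (\<phi> i))) \<longlonglongrightarrow> load TS r hi a * lp a (load TS r hi a)"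
      by (rule tendsto_mult[OF Yc tau_conv[OF aA At_rv[OF a] phi YI Yc CB.load_lim_Ires[OF aA TS_sub]]])
  qed
  have Lle: "L \<le> cost At TS r lp hi" by (rule Lmin[OF hifeas])
  have SOphi: "(\<lambda>i. cost A S r \<tau> (fS (\<phi> i)) / (T (\<phi> i) * g (\<phi> i))) \<longlonglongrightarrow> L"
  proof (rule order_tendstoI)
    fix b assume b: "b < L"
    have "eventually (\<lambda>i. b < (\<Sum>a\<in>At. Y a i * (\<tau> a (T (\<phi> i) * Y a i) / g (\<phi> i)))) sequentially"
      using order_tendstoD(1)[OF lowlim] b Lle by simp
    then show "eventually (\<lambda>i. b < cost A S r \<tau> (fS (\<phi> i)) / (T (\<phi> i) * g (\<phi> i))) sequentially"
      by (rule eventually_mono) (use lower in \<open>meson less_le_trans\<close>)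
  next
    fix b assume b: "L < b"
    have "eventually (\<lambda>i. cost A S r \<tau> (fN (\<phi> i)) / (T (\<phi> i) * g (\<phi> i)) < b) sequentially"
      using order_tendstoD(2)[OF NEphi b] .
    then show "eventually (\<lambda>i. cost A S r \<tau> (fS (\<phi> i)) / (T (\<phi> i) * g (\<phi> i)) < b) sequentially"
      by (rule eventually_mono) (use SleN' in \<open>meson le_less_trans\<close>)
  qed
  have lim: "(\<lambda>i. (cost A S r \<tau> (fN (\<phi> i)) / (T (\<phi> i) * g (\<phi> i))) / (cost A S r \<tau> (fS (\<phi> i)) / (T (\<phi> i) * g (\<phi> i)))) \<longlonglongrightarrow> L / L"
    by (rule tendsto_divide[OF NEphi SOphi]) (use Lpos in simp)
  have eq: "(\<lambda>i. (cost A S r \<tau> (fN (\<phi> i)) / (T (\<phi> i) * g (\<phi> i))) / (cost A S r \<tau> (fS (\<phi> i)) / (T (\<phi> i) * g (\<phi> i))))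
      = (\<lambda>i. cost A S r \<tau> (fN (\<phi> i)) / cost A S r \<tau> (fS (\<phi> i)))"
  proof (rule ext, rule div_div_same)
    fix i show "T (\<phi> i) * g (\<phi> i) \<noteq> 0" using Tpos[of "\<phi> i"] gpos[of "\<phi> i"] by simp
  qed
  have LL: "L / L = 1" using Lpos by simp
  have "(\<lambda>i. cost A S r \<tau> (fN (\<phi> i)) / cost A S r \<tau> (fS (\<phi> i))) \<longlonglongrightarrow> 1"
    using lim unfolding eq LL .
  then show ?thesis using phi by blast
qed

end



lemma not_conv_subseq:
  fixes R :: "nat \<Rightarrow> real"
  assumes "\<not> R \<longlonglongrightarrow> 1"
  obtains e and \<psi> :: "nat \<Rightarrow> nat" where "e > 0" "strict_mono \<psi>" "\<And>n. e \<le> \<bar>R (\<psi> n) - 1\<bar>"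
proof -
  obtain e where e0: "e > 0" and ne: "\<not> eventually (\<lambda>n. dist (R n) 1 < e) sequentially"
    using assms unfolding tendsto_iff by auto
  have "\<forall>N. \<exists>n\<ge>N. e \<le> \<bar>R n - 1\<bar>"
  proof
    fix N
    show "\<exists>n\<ge>N. e \<le> \<bar>R n - 1\<bar>"
    proof (rule ccontr)
      assume a: "\<not> (\<exists>n\<ge>N. e \<le> \<bar>R n - 1\<bar>)"
      have "\<forall>n\<ge>N. dist (R n) 1 < e"
      proof (intro allI impI)
        fix n assume "N \<le> n"
        then have "\<not> e \<le> \<bar>R n - 1\<bar>" using a by blast
        then show "dist (R n) 1 < e" by (simp add: dist_real_def)
      qed
      then have "eventually (\<lambda>n. dist (R n) 1 < e) sequentially"
        unfolding eventually_sequentially by blast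
      then show False using ne by contradiction
    qed
  qed
  then have "infinite {n. e \<le> \<bar>R n - 1\<bar>}"
    unfolding infinite_nat_iff_unbounded_le by simp
  from infinite_enumerate[OF this]
  obtain \<psi> :: "nat \<Rightarrow> nat" where p: "strict_mono \<psi>" "\<forall>n. \<psi> n \<in> {n. e \<le> \<bar>R n - 1\<bar>}"
    by blast
  show ?thesis
  proof (rule that[OF e0 p(1)])
    fix n show "e \<le> \<bar>R (\<psi> n) - 1\<bar>" using p(2) by simp
  qed
qed

theorem theorem2:
  fixes A :: "'a set" and K :: nat and Sg :: "nat \<Rightarrow> 's set"
    and r :: "'a \<Rightarrow> 's \<Rightarrow> real" and \<tau> :: "'a \<Rightarrow> real \<Rightarrow> real"
    and D :: "(nat \<Rightarrow> real) set"
  assumes "ncg A K Sg r \<tau>"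
    and "D \<subseteq> {d. \<forall>k<K. 0 \<le> d k}"
    and "scalable A K Sg r \<tau> D"
  shows "awdg A K Sg r \<tau> D"
  unfolding awdg_def
proof (intro allI impI)
  fix dn :: "nat \<Rightarrow> nat \<Rightarrow> real" and fne fso :: "nat \<Rightarrow> 's \<Rightarrow> real"
  assume dnA: "(\<forall>n. dn n \<in> D) \<and> filterlim (\<lambda>n. total K (dn n)) at_top sequentially"
  assume NESO: "(\<forall>n. is_NE A {..<K} Sg r \<tau> (dn n) (fne n)) \<and> (\<forall>n. is_SO A {..<K} Sg r \<tau> (dn n) (fso n))"
  define R where "R n = cost A (strats {..<K} Sg) r \<tau> (fne n) / cost A (strats {..<K} Sg) r \<tau> (fso n)" for n
  show "(\<lambda>n. cost A (strats {..<K} Sg) r \<tau> (fne n) / cost A (strats {..<K} Sg) r \<tau> (fso n)) \<longlonglongrightarrow> 1"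
    unfolding R_def[symmetric]
  proof (rule ccontr)
    assume "\<not> R \<longlonglongrightarrow> 1"
    then obtain e and \<psi> :: "nat \<Rightarrow> nat" where e: "e > 0" "strict_mono \<psi>" "\<And>n. e \<le> \<bar>R (\<psi> n) - 1\<bar>"
      by (rule not_conv_subseq) (rule that; assumption)
    define dn' where "dn' n = dn (\<psi> n)" for n
    have lim: "filterlim (\<lambda>n. total K (dn' n)) at_top sequentially"
      unfolding dn'_def using filterlim_compose[OF conjunct2[OF dnA] filterlim_subseq[OF e(2)]]
      by (simp add: o_def)
    have inD: "\<forall>n. dn' n \<in> D" using dnA unfolding dn'_def by auto
    from assms(3)[unfolded scalable_def Let_def, rule_format, OF conjI[OF inD lim]]
    obtain ns g lam l where s1: "strict_mono ns" and s2: "\<forall>i. 0 < g i" and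
             s3: "\<forall>k<K. (\<lambda>i. dn' (ns i) k / total K (dn' (ns i))) \<longlonglongrightarrow> lam k" and
             s4: "\<forall>a\<in>A. limit_price_fun (Ires (strats {..<K} Sg) r a) (l a)" and
             s5: "\<forall>a\<in>A. \<forall>x\<in>Ires (strats {..<K} Sg) r a. (\<lambda>i. ereal (\<tau> a (total K (dn' (ns i)) * x) / g i)) \<longlonglongrightarrow> l a x" and
             s6: "\<forall>k<K.
                (\<forall>F :: nat \<Rightarrow> 's \<Rightarrow> real. (\<forall>i. feasible {..<K} Sg (dn' (ns i)) (F i)) \<longrightarrow>
                   (\<lambda>i. (\<Sum>s\<in>Sg k. F i s * sprice A (strats {..<K} Sg) r \<tau> (F i) s) / (total K (dn' (ns i)) * g i)) \<longlonglongrightarrow> 0)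
                \<or> (\<exists>s\<in>Sg k. tight A (strats {..<K} Sg) r l s)" and
             s7: "\<forall>f h. is_NE (tight_res A (strats {..<K} Sg) r l) (tight_groups A (strats {..<K} Sg) r l Sg K)
                 (tight_strats A (strats {..<K} Sg) r l Sg) r (\<lambda>a x. real_of_ereal (l a x)) lam f \<and>
                is_SO (tight_res A (strats {..<K} Sg) r l) (tight_groups A (strats {..<K} Sg) r l Sg K)
                 (tight_strats A (strats {..<K} Sg) r l Sg) r (\<lambda>a x. real_of_ereal (l a x)) lam h \<longrightarrow>
                cost (tight_res A (strats {..<K} Sg) r l) (strats (tight_groups A (strats {..<K} Sg) r l Sg K)
                 (tight_strats A (strats {..<K} Sg) r l Sg)) r (\<lambda>a x. real_of_ereal (l a x)) f =
                cost (tight_res A (strats {..<K} Sg) r l) (strats (tight_groups A (strats {..<K} Sg) r l Sg K)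
                 (tight_strats A (strats {..<K} Sg) r l Sg)) r (\<lambda>a x. real_of_ereal (l a x)) h" and
             s8: "\<forall>f. is_NE (tight_res A (strats {..<K} Sg) r l) (tight_groups A (strats {..<K} Sg) r l Sg K)
                 (tight_strats A (strats {..<K} Sg) r l Sg) r (\<lambda>a x. real_of_ereal (l a x)) lam f \<longrightarrow>
                cost (tight_res A (strats {..<K} Sg) r l) (strats (tight_groups A (strats {..<K} Sg) r l Sg K)
                 (tight_strats A (strats {..<K} Sg) r l Sg)) r (\<lambda>a x. real_of_ereal (l a x)) f > 0"
      by (elim exE conjE) (rule that; assumption)
    have Tlim: "filterlim (\<lambda>i. total K (dn' (ns i))) at_top sequentially"
      using filterlim_compose[OF lim filterlim_subseq[OF s1]] by (simp add: o_def)
    then have "eventually (\<lambda>i. 1 \<le> total K (dn' (ns i))) sequentially"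
      unfolding filterlim_at_top by blast
    then obtain N where N: "\<And>i. i \<ge> N \<Longrightarrow> 1 \<le> total K (dn' (ns i))"
      unfolding eventually_sequentially by blast
    define \<rho> where "\<rho> i = \<psi> (ns (i + N))" for i
    define d where "d i = dn (\<rho> i)" for i
    define T' where "T' i = total K (d i)" for i
    define g' where "g' i = g (i + N)" for i
    define fN where "fN i = fne (\<rho> i)" for i
    define fS where "fS i = fso (\<rho> i)" for i
    have dd: "d i = dn' (ns (i + N))" for i unfolding d_def dn'_def \<rho>_def ..
    have rho: "strict_mono \<rho>"
    proof -
      have "strict_mono (\<lambda>i. i + N)" by (simp add: strict_mono_def)
      then have "strict_mono (ns \<circ> (\<lambda>i. i + N))" using strict_mono_o s1 by blast
      then have "strict_mono (\<psi> \<circ> (ns \<circ> (\<lambda>i. i + N)))" using strict_mono_o e(2) by blast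
      then show ?thesis unfolding \<rho>_def o_def by simp
    qed
    have shift: "strict_mono (\<lambda>i::nat. i + N)" by (simp add: strict_mono_def)
    interpret X: sc A K Sg r \<tau> d T' g' lam l fN fS
    proof unfold_locales
      show "ncg A K Sg r \<tau>" by (rule assms(1))
      show "\<And>i k. k < K \<Longrightarrow> 0 \<le> d i k"
        using assms(2) dnA unfolding d_def by blast
      show "\<And>i. T' i = total K (d i)" unfolding T'_def ..
      show "\<And>i. 0 < T' i" unfolding T'_def dd using N by (meson le_add2 less_le_trans zero_less_one)
      show "filterlim T' at_top sequentially"
        using filterlim_compose[OF Tlim filterlim_subseq[OF shift]] unfolding T'_def dd by (simp add: o_def)
      show "\<And>i. 0 < g' i" unfolding g'_def using s2 by blast
      show "\<And>k. k < K \<Longrightarrow> (\<lambda>i. d i k / T' i) \<longlonglongrightarrow> lam k"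
        unfolding T'_def dd using LIMSEQ_ignore_initial_segment s3 by blast
      show "\<And>a. a \<in> A \<Longrightarrow> limit_price_fun (Ires (strats {..<K} Sg) r a) (l a)" using s4 by blast
      show "\<And>a x. a \<in> A \<Longrightarrow> x \<in> Ires (strats {..<K} Sg) r a \<Longrightarrow>
               (\<lambda>i. ereal (\<tau> a (T' i * x) / g' i)) \<longlonglongrightarrow> l a x"
      proof -
        fix a x assume "a \<in> A" "x \<in> Ires (strats {..<K} Sg) r a"
        then have "(\<lambda>i. ereal (\<tau> a (total K (dn' (ns i)) * x) / g i)) \<longlonglongrightarrow> l a x" using s5 by blast
        from LIMSEQ_ignore_initial_segment[OF this, of N]
        show "(\<lambda>i. ereal (\<tau> a (T' i * x) / g' i)) \<longlonglongrightarrow> l a x" unfolding T'_def g'_def dd .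
      qed
      show "\<And>k. k < K \<Longrightarrow>
       (\<lambda>i. (\<Sum>s\<in>Sg k. fN i s * sprice A (strats {..<K} Sg) r \<tau> (fN i) s) / (T' i * g' i)) \<longlonglongrightarrow> 0
       \<or> (\<exists>s\<in>Sg k. tight A (strats {..<K} Sg) r l s)"
      proof -
        fix k assume k: "k < K"
        show "(\<lambda>i. (\<Sum>s\<in>Sg k. fN i s * sprice A (strats {..<K} Sg) r \<tau> (fN i) s) / (T' i * g' i)) \<longlonglongrightarrow> 0
          \<or> (\<exists>s\<in>Sg k. tight A (strats {..<K} Sg) r l s)"
        proof (cases "\<exists>s\<in>Sg k. tight A (strats {..<K} Sg) r l s")
          case True then show ?thesis by blast
        next
          case False
          have fe: "\<forall>i. feasible {..<K} Sg (dn' (ns i)) (fne (\<psi> (ns i)))"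
            using NESO unfolding is_NE_def dn'_def by blast
          have "(\<lambda>i. (\<Sum>s\<in>Sg k. fne (\<psi> (ns i)) s * sprice A (strats {..<K} Sg) r \<tau> (fne (\<psi> (ns i))) s) / (total K (dn' (ns i)) * g i)) \<longlonglongrightarrow> 0"
          proof -
            have d6: "(\<forall>F :: nat \<Rightarrow> 's \<Rightarrow> real. (\<forall>i. feasible {..<K} Sg (dn' (ns i)) (F i)) \<longrightarrow>
                   (\<lambda>i. (\<Sum>s\<in>Sg k. F i s * sprice A (strats {..<K} Sg) r \<tau> (F i) s) / (total K (dn' (ns i)) * g i)) \<longlonglongrightarrow> 0)
                \<or> (\<exists>s\<in>Sg k. tight A (strats {..<K} Sg) r l s)" using s6 k by blast
            then have "\<forall>F :: nat \<Rightarrow> 's \<Rightarrow> real. (\<forall>i. feasible {..<K} Sg (dn' (ns i)) (F i)) \<longrightarrow>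
                   (\<lambda>i. (\<Sum>s\<in>Sg k. F i s * sprice A (strats {..<K} Sg) r \<tau> (F i) s) / (total K (dn' (ns i)) * g i)) \<longlonglongrightarrow> 0"
              using False by blast
            from mp[OF spec[OF this, of "\<lambda>i. fne (\<psi> (ns i))"] fe] show ?thesis .
          qed
          from LIMSEQ_ignore_initial_segment[OF this, of N]
          have "(\<lambda>i. (\<Sum>s\<in>Sg k. fN i s * sprice A (strats {..<K} Sg) r \<tau> (fN i) s) / (T' i * g' i)) \<longlonglongrightarrow> 0"
            unfolding T'_def g'_def dd fN_def \<rho>_def .
          then show ?thesis by blast
        qed
      qed
      show "\<And>f h. is_NE (tight_res A (strats {..<K} Sg) r l) (tight_groups A (strats {..<K} Sg) r l Sg K)
                 (tight_strats A (strats {..<K} Sg) r l Sg) r (\<lambda>a x. real_of_ereal (l a x)) lam f \<and>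
              is_SO (tight_res A (strats {..<K} Sg) r l) (tight_groups A (strats {..<K} Sg) r l Sg K)
                 (tight_strats A (strats {..<K} Sg) r l Sg) r (\<lambda>a x. real_of_ereal (l a x)) lam h \<Longrightarrow>
         cost (tight_res A (strats {..<K} Sg) r l) (strats (tight_groups A (strats {..<K} Sg) r l Sg K)
                 (tight_strats A (strats {..<K} Sg) r l Sg)) r (\<lambda>a x. real_of_ereal (l a x)) f =
         cost (tight_res A (strats {..<K} Sg) r l) (strats (tight_groups A (strats {..<K} Sg) r l Sg K)
                 (tight_strats A (strats {..<K} Sg) r l Sg)) r (\<lambda>a x. real_of_ereal (l a x)) h"
        using s7 by blast
      show "\<And>f. is_NE (tight_res A (strats {..<K} Sg) r l) (tight_groups A (strats {..<K} Sg) r l Sg K)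
                 (tight_strats A (strats {..<K} Sg) r l Sg) r (\<lambda>a x. real_of_ereal (l a x)) lam f \<Longrightarrow>
         cost (tight_res A (strats {..<K} Sg) r l) (strats (tight_groups A (strats {..<K} Sg) r l Sg K)
                 (tight_strats A (strats {..<K} Sg) r l Sg)) r (\<lambda>a x. real_of_ereal (l a x)) f > 0"
        using s8 by blast
      show "\<And>i. is_NE A {..<K} Sg r \<tau> (d i) (fN i)" using NESO unfolding d_def fN_def by blast
      show "\<And>i. is_SO A {..<K} Sg r \<tau> (d i) (fS i)" using NESO unfolding d_def fS_def by blast
    qed
    obtain \<psi>2 where p2: "strict_mono \<psi>2"
      "(\<lambda>i. cost A (strats {..<K} Sg) r \<tau> (fN (\<psi>2 i)) / cost A (strats {..<K} Sg) r \<tau> (fS (\<psi>2 i))) \<longlonglongrightarrow> 1"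
      using X.main_sub by blast
    have "(\<lambda>i. R (\<rho> (\<psi>2 i))) \<longlonglongrightarrow> 1" using p2(2) unfolding R_def fN_def fS_def .
    then have "eventually (\<lambda>i. dist (R (\<rho> (\<psi>2 i))) 1 < e) sequentially"
      using e(1) unfolding tendsto_iff by blast
    then obtain i where "dist (R (\<rho> (\<psi>2 i))) 1 < e" using eventually_sequentially by auto
    moreover have "e \<le> \<bar>R (\<rho> (\<psi>2 i)) - 1\<bar>" unfolding \<rho>_def by (rule e(3))
    ultimately show False by (simp add: dist_real_def)
  qed
qed


end
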